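(* Let $\ell>0$, $T>0$, let $a_1,a_2$ be constants with $a_1,a_2\ge\underline a>0$, and let $u_0\in L^2(0,\ell)$, $u_0\ne0$. For $i=1,2$ let $u_i\in C^0([0,T];L^2(0,\ell))$ be the solution of $$\partial_t u_i-a_i\,\partial_x(x\,\partial_x u_i)=0\ \text{ in }(0,\ell)\times(0,T),\quad x\,\partial_x u_i(x,t)|_{x=0}=0,\ u_i(\ell,t)=0,\quad u_i(x,0)=u_0(x).$$ If for some $t_0\in(0,T]$ we have $\partial_t u_1(x,t_0)=\partial_t u_2(x,t_0)$ and $\partial_x u_1(x,t_0)=\partial_x u_2(x,t_0)$ for all $x\in(0,\ell)$, then $a_1=a_2$.
   Context: Solutions are the semigroup solutions $u_i(t)=e^{tA_i}u_0$, where $A_i u=a_i\,\partial_x(x\partial_x u)$ on $D(A_i)=\{u\in L^2(0,\ell):\int_0^\ell x|\partial_xu|^2dx<\infty,\ u(\ell)=0,\ x\partial_x u\in H^1(0,\ell)\}$ generates an analytic contraction semigroup on $L^2(0,\ell)$. *)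

theory Defs
  imports "HOL-Analysis.Analysis"
begin

definition L2 :: "real \<Rightarrow> (real \<Rightarrow> real) \<Rightarrow> bool" where
  "L2 l f \<longleftrightarrow> set_borel_measurable lborel {0<..<l} f
              \<and> set_integrable lborel {0<..<l} (\<lambda>x. (f x)\<^sup>2)"

definition sqL2 :: "real \<Rightarrow> (real \<Rightarrow> real) \<Rightarrow> real" where
  "sqL2 l f = (LINT x:{0<..<l}|lborel. (f x)\<^sup>2)"

text \<open>f belongs to D(A) (taking its continuous representative on (0,l]) and
  h represents the weak derivative of x f'(x), i.e. (x f')' = h in L2(0,l).
  The condition x f' in H1(0,l) is expressed in the 1D way: x f' is in L2 and
  is the integral of an L2 function h.\<close>
definition domA :: "real \<Rightarrow> (real \<Rightarrow> real) \<Rightarrow> (real \<Rightarrow> real) \<Rightarrow> bool" where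
  "domA l f h \<longleftrightarrow> L2 l f \<and> L2 l h
     \<and> (\<forall>x\<in>{0<..<l}. f differentiable (at x))
     \<and> continuous (at_left l) f \<and> f l = 0
     \<and> set_integrable lborel {0<..<l} (\<lambda>x. x * (deriv f x)\<^sup>2)
     \<and> L2 l (\<lambda>x. x * deriv f x)
     \<and> (\<forall>x y. 0 < x \<longrightarrow> x \<le> y \<longrightarrow> y < l \<longrightarrow>
           y * deriv f y - x * deriv f x = (LINT s:{x..y}|lborel. h s))"

definition L2_has_deriv ::
  "real \<Rightarrow> real \<Rightarrow> (real \<Rightarrow> real \<Rightarrow> real) \<Rightarrow> real \<Rightarrow> (real \<Rightarrow> real) \<Rightarrow> bool" where
  "L2_has_deriv l T u t v \<longleftrightarrow> L2 l v \<and>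
     ((\<lambda>s. sqL2 l (\<lambda>x. (u s x - u t x) / (s - t) - v x)) \<longlongrightarrow> 0) (at t within {0..T})"

text \<open>u (as t \<mapsto> u t) is the (strong/semigroup) solution of
  u_t = a (x u_x)_x on (0,l) x (0,T], x u_x|_{x=0} = 0, u(l,t) = 0, u(.,0) = u0:
  u in C0([0,T];L2), u(t) in D(A) and u'(t) = A u(t) in L2 for t in (0,T].\<close>
definition heat_sol ::
  "real \<Rightarrow> real \<Rightarrow> real \<Rightarrow> (real \<Rightarrow> real) \<Rightarrow> (real \<Rightarrow> real \<Rightarrow> real) \<Rightarrow> bool" where
  "heat_sol l T a u0 u \<longleftrightarrow>
     (\<forall>t\<in>{0..T}. L2 l (u t))
   \<and> (\<forall>t\<in>{0..T}. ((\<lambda>s. sqL2 l (\<lambda>x. u s x - u t x)) \<longlongrightarrow> 0) (at t within {0..T}))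
   \<and> (AE x in lborel. x \<in> {0<..<l} \<longrightarrow> u 0 x = u0 x)
   \<and> (\<forall>t\<in>{0<..T}. \<exists>h. domA l (u t) h \<and> L2_has_deriv l T u t (\<lambda>x. a * h x))"

end

theory Submission
  imports Defs "HOL-Real_Asymp.Real_Asymp"
begin
lemma sq_int_prod:
  fixes F G :: "'a \<Rightarrow> real"
  assumes [measurable]: "F \<in> borel_measurable M" "G \<in> borel_measurable M"
    and "integrable M (\<lambda>x. (F x)\<^sup>2)" "integrable M (\<lambda>x. (G x)\<^sup>2)"
  shows "integrable M (\<lambda>x. F x * G x)"
proof (rule Bochner_Integration.integrable_bound)
  show "integrable M (\<lambda>x. ((F x)\<^sup>2 + (G x)\<^sup>2) / 2)" using assms by auto
  show "(\<lambda>x. F x * G x) \<in> borel_measurable M" by measurable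
  show "AE x in M. norm (F x * G x) \<le> norm (((F x)\<^sup>2 + (G x)\<^sup>2) / 2)"
  proof (rule AE_I2)
    fix x
    have "2 * \<bar>F x * G x\<bar> \<le> (F x)\<^sup>2 + (G x)\<^sup>2"
    proof -
      have "0 \<le> (\<bar>F x\<bar> - \<bar>G x\<bar>)\<^sup>2" by simp
      then show ?thesis by (simp add: power2_eq_square abs_mult algebra_simps)
    qed
    then show "norm (F x * G x) \<le> norm (((F x)\<^sup>2 + (G x)\<^sup>2) / 2)" by simp
  qed
qed

lemma sq_int_lin:
  fixes F G :: "'a \<Rightarrow> real"
  assumes [measurable]: "F \<in> borel_measurable M" "G \<in> borel_measurable M"
    and "integrable M (\<lambda>x. (F x)\<^sup>2)" "integrable M (\<lambda>x. (G x)\<^sup>2)"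
  shows "integrable M (\<lambda>x. (a * F x + b * G x)\<^sup>2)"
proof -
  have "integrable M (\<lambda>x. a\<^sup>2 * (F x)\<^sup>2 + 2 * a * b * (F x * G x) + b\<^sup>2 * (G x)\<^sup>2)"
    using assms sq_int_prod[OF assms] by auto
  then show ?thesis by (simp add: power2_eq_square algebra_simps)
qed

lemma CS_int:
  fixes F G :: "'a \<Rightarrow> real"
  assumes [measurable]: "F \<in> borel_measurable M" "G \<in> borel_measurable M"
    and iF: "integrable M (\<lambda>x. (F x)\<^sup>2)" and iG: "integrable M (\<lambda>x. (G x)\<^sup>2)"
  shows "(\<integral>x. F x * G x \<partial>M)\<^sup>2 \<le> (\<integral>x. (F x)\<^sup>2 \<partial>M) * (\<integral>x. (G x)\<^sup>2 \<partial>M)"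
proof -
  define A where "A = (\<integral>x. (F x)\<^sup>2 \<partial>M)"
  define B where "B = (\<integral>x. (G x)\<^sup>2 \<partial>M)"
  define C where "C = (\<integral>x. F x * G x \<partial>M)"
  have iFG: "integrable M (\<lambda>x. F x * G x)" using sq_int_prod[OF assms] .
  have key: "0 \<le> A + 2 * t * C + t\<^sup>2 * B" for t
  proof -
    have "0 \<le> (\<integral>x. (F x + t * G x)\<^sup>2 \<partial>M)" by simp
    also have "(\<integral>x. (F x + t * G x)\<^sup>2 \<partial>M)
        = (\<integral>x. (F x)\<^sup>2 + (2 * t) * (F x * G x) + t\<^sup>2 * (G x)\<^sup>2 \<partial>M)"
      by (simp add: power2_eq_square algebra_simps)
    also have "\<dots> = A + 2 * t * C + t\<^sup>2 * B"
      using iF iG iFG by (simp add: A_def B_def C_def)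
    finally show ?thesis .
  qed
  have A0: "0 \<le> A" unfolding A_def by simp
  have B0: "0 \<le> B" unfolding B_def by simp
  show ?thesis
  proof (cases "B = 0")
    case True
    have "C = 0"
    proof (rule ccontr)
      assume "C \<noteq> 0"
      have "0 \<le> A + 2 * (-(A+1)/(2*C)) * C" using key[of "-(A+1)/(2*C)"] True by simp
      also have "\<dots> = -1" using \<open>C \<noteq> 0\<close> by (simp add: field_simps)
      finally show False by simp
    qed
    then show ?thesis using True by (simp add: A_def B_def C_def[symmetric])
  next
    case False
    then have Bp: "B > 0" using B0 by simp
    have "0 \<le> A + 2 * (-C/B) * C + (-C/B)\<^sup>2 * B" by (rule key)
    also have "\<dots> = A - C\<^sup>2 / B" using Bp by (simp add: field_simps power2_eq_square)
    finally have "C\<^sup>2 / B \<le> A" by simp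
    then have "C\<^sup>2 \<le> A * B" using Bp by (simp add: field_simps)
    then show ?thesis by (simp add: A_def B_def C_def)
  qed
qed

definition L2on :: "real set \<Rightarrow> (real \<Rightarrow> real) \<Rightarrow> bool" where
  "L2on S f \<longleftrightarrow> set_borel_measurable lborel S f \<and> set_integrable lborel S (\<lambda>x. (f x)\<^sup>2)"

lemma L2_eq: "L2 l f = L2on {0<..<l} f" by (simp add: L2_def L2on_def)

lemma ind_sq: "indicator S x * (f x)\<^sup>2 = (indicator S x * f x)\<^sup>2" for f :: "real \<Rightarrow> real"
  by (simp add: indicator_def)

lemma ind_prod: "indicator S x * (f x * g x) = (indicator S x * f x) * (indicator S x * g x)"
  for f g :: "real \<Rightarrow> real"
  by (simp add: indicator_def)

lemma L2on_D:
  assumes "L2on S f"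
  shows "(\<lambda>x. indicator S x * f x) \<in> borel_measurable lborel"
    "integrable lborel (\<lambda>x. (indicator S x * f x)\<^sup>2)"
  using assms unfolding L2on_def set_borel_measurable_def set_integrable_def
  by (auto simp: ind_sq)

lemma L2on_I:
  assumes "(\<lambda>x. indicator S x * f x) \<in> borel_measurable lborel"
    "integrable lborel (\<lambda>x. (indicator S x * f x)\<^sup>2)"
  shows "L2on S f"
  using assms unfolding L2on_def set_borel_measurable_def set_integrable_def
  by (auto simp: ind_sq)

lemma L2on_prod:
  assumes "L2on S f" "L2on S g"
  shows "set_integrable lborel S (\<lambda>x. f x * g x)"
  using sq_int_prod[OF L2on_D(1)[OF assms(1)] L2on_D(1)[OF assms(2)]
      L2on_D(2)[OF assms(1)] L2on_D(2)[OF assms(2)]]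
  unfolding set_integrable_def by (simp add: ind_prod)

lemma L2on_lin:
  assumes "L2on S f" "L2on S g"
  shows "L2on S (\<lambda>x. a * f x + b * g x)"
proof (rule L2on_I)
  note m = L2on_D(1)[OF assms(1)] L2on_D(1)[OF assms(2)]
  have e: "indicator S x * (a * f x + b * g x) = a * (indicator S x * f x) + b * (indicator S x * g x)" for x
    by (simp add: algebra_simps)
  show "(\<lambda>x. indicator S x * (a * f x + b * g x)) \<in> borel_measurable lborel"
    unfolding e using m by measurable
  show "integrable lborel (\<lambda>x. (indicator S x * (a * f x + b * g x))\<^sup>2)"
    unfolding e by (rule sq_int_lin[OF m L2on_D(2)[OF assms(1)] L2on_D(2)[OF assms(2)]])
qed

lemma L2on_scale: "L2on S f \<Longrightarrow> L2on S (\<lambda>x. a * f x)"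
  using L2on_lin[of S f f a 0] by simp

lemma L2on_diff: "L2on S f \<Longrightarrow> L2on S g \<Longrightarrow> L2on S (\<lambda>x. f x - g x)"
  using L2on_lin[of S f g 1 "-1"] by simp

lemma L2on_add: "L2on S f \<Longrightarrow> L2on S g \<Longrightarrow> L2on S (\<lambda>x. f x + g x)"
  using L2on_lin[of S f g 1 1] by simp

lemma L2on_cong: "L2on S f \<Longrightarrow> (\<And>x. x \<in> S \<Longrightarrow> f x = g x) \<Longrightarrow> L2on S g"
proof -
  assume a: "L2on S f" "\<And>x. x \<in> S \<Longrightarrow> f x = g x"
  have e: "\<And>x. indicator S x * f x = indicator S x * g x"
    using a(2) by (auto simp: indicator_def)
  show ?thesis using L2on_D[OF a(1)] by (intro L2on_I) (simp_all add: e)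
qed

lemma L2on_subset:
  assumes "L2on S f" "T \<subseteq> S" "T \<in> sets lborel"
  shows "L2on T f"
proof (rule L2on_I)
  have e: "indicator T x * f x = indicator T x * (indicator S x * f x)" for x
    using assms(2) by (auto simp: indicator_def)
  show "(\<lambda>x. indicator T x * f x) \<in> borel_measurable lborel"
    unfolding e using L2on_D(1)[OF assms(1)] assms(3) by measurable
  have "set_integrable lborel T (\<lambda>x. (f x)\<^sup>2)"
    using assms unfolding L2on_def by (auto intro: set_integrable_subset)
  then show "integrable lborel (\<lambda>x. (indicator T x * f x)\<^sup>2)"
    unfolding set_integrable_def by (simp add: ind_sq)
qed

lemma L2on_integrable:
  assumes "L2on S f" "S \<in> sets lborel" "emeasure lborel S < \<infinity>"
  shows "set_integrable lborel S f"
  unfolding set_integrable_def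
proof (rule Bochner_Integration.integrable_bound)
  have "integrable lborel (indicator S :: real \<Rightarrow> real)"
    using assms by (intro integrable_real_indicator) auto
  then show "integrable lborel (\<lambda>x. indicator S x + (indicator S x * f x)\<^sup>2 :: real)"
    using L2on_D(2)[OF assms(1)] by auto
  show "(\<lambda>x. indicator S x *\<^sub>R f x) \<in> borel_measurable lborel"
    using L2on_D(1)[OF assms(1)] by simp
  show "AE x in lborel. norm (indicator S x *\<^sub>R f x) \<le> norm (indicator S x + (indicator S x * f x)\<^sup>2 :: real)"
  proof (rule AE_I2)
    fix x
    have "\<bar>f x\<bar> \<le> 1 + (f x)\<^sup>2"
    proof (cases "\<bar>f x\<bar> \<le> 1")
      case True then show ?thesis using zero_le_power2[of "f x"] by linarith
    next
      case False
      then have "\<bar>f x\<bar> * 1 \<le> \<bar>f x\<bar> * \<bar>f x\<bar>" by (intro mult_left_mono) auto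
      then show ?thesis by (simp add: power2_eq_square abs_mult_self_eq)
    qed
    then show "norm (indicator S x *\<^sub>R f x) \<le> norm (indicator S x + (indicator S x * f x)\<^sup>2 :: real)"
      by (simp add: indicator_def)
  qed
qed

lemma L2on_CS:
  assumes "L2on S f" "L2on S g"
  shows "(LINT x:S|lborel. f x * g x)\<^sup>2 \<le> (LINT x:S|lborel. (f x)\<^sup>2) * (LINT x:S|lborel. (g x)\<^sup>2)"
  using CS_int[OF L2on_D(1)[OF assms(1)] L2on_D(1)[OF assms(2)]
      L2on_D(2)[OF assms(1)] L2on_D(2)[OF assms(2)]]
  unfolding set_lebesgue_integral_def by (simp add: ind_prod ind_sq)

lemma L2on_sq_nonneg: "0 \<le> (LINT x:S|lborel. (f x)\<^sup>2)" for f :: "real \<Rightarrow> real"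
  unfolding set_lebesgue_integral_def by (intro integral_nonneg_AE AE_I2) (simp add: indicator_def)

lemma L2on_sq_ineq:
  assumes "L2on S f" "L2on S g"
  shows "(LINT x:S|lborel. (f x + g x)\<^sup>2) \<le> 2 * (LINT x:S|lborel. (f x)\<^sup>2) + 2 * (LINT x:S|lborel. (g x)\<^sup>2)"
proof -
  have i1: "set_integrable lborel S (\<lambda>x. (f x + g x)\<^sup>2)"
    using L2on_add[OF assms] unfolding L2on_def by simp
  have i2: "set_integrable lborel S (\<lambda>x. 2 * (f x)\<^sup>2 + 2 * (g x)\<^sup>2)"
    using assms unfolding L2on_def by auto
  have "(LINT x:S|lborel. (f x + g x)\<^sup>2) \<le> (LINT x:S|lborel. 2 * (f x)\<^sup>2 + 2 * (g x)\<^sup>2)"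
  proof (rule set_integral_mono[OF i1 i2])
    fix x
    have "0 \<le> (f x - g x)\<^sup>2" by simp
    then show "(f x + g x)\<^sup>2 \<le> 2 * (f x)\<^sup>2 + 2 * (g x)\<^sup>2" by (simp add: power2_eq_square algebra_simps)
  qed
  also have "\<dots> = (LINT x:S|lborel. 2 * (f x)\<^sup>2) + (LINT x:S|lborel. 2 * (g x)\<^sup>2)"
    by (rule set_integral_add) (use assms in \<open>auto simp: L2on_def\<close>)
  also have "\<dots> = 2 * (LINT x:S|lborel. (f x)\<^sup>2) + 2 * (LINT x:S|lborel. (g x)\<^sup>2)"
    by simp
  finally show ?thesis .
qed

lemma set_integral_mono_set:
  fixes f :: "'a \<Rightarrow> real"
  assumes "set_integrable M B f" "A \<in> sets M" "A \<subseteq> B" "\<And>x. x \<in> B \<Longrightarrow> 0 \<le> f x"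
  shows "(LINT x:A|M. f x) \<le> (LINT x:B|M. f x)"
proof -
  have iA: "set_integrable M A f" by (rule set_integrable_subset[OF assms(1-3)])
  show ?thesis
    unfolding set_lebesgue_integral_def
    using iA assms(1) unfolding set_integrable_def
    by (rule integral_mono) (use assms(3,4) in \<open>auto simp: indicator_def\<close>)
qed

lemma ln_int:
  fixes a b :: real
  assumes "0 < a" "a \<le> b"
  shows "(LINT x:{a..b}|lborel. 1 / x) = ln b - ln a"
proof -
  have "integral\<^sup>L lborel (\<lambda>x. indicator {a .. b} x *\<^sub>R (1 / x)) = ln b - ln a"
  proof (rule integral_FTC_atLeastAtMost[OF assms(2)])
    fix x assume "a \<le> x" "x \<le> b"
    then have "x > 0" using assms by simp
    then have "(ln has_real_derivative 1 / x) (at x)" by (auto intro!: derivative_eq_intros)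
    then show "(ln has_vector_derivative 1 / x) (at x within {a..b})"
      by (simp add: has_real_derivative_iff_has_vector_derivative has_vector_derivative_at_within)
  next
    show "continuous_on {a..b} (\<lambda>x. 1 / x :: real)"
      using assms by (intro continuous_intros) auto
  qed
  then show ?thesis by (simp add: set_lebesgue_integral_def)
qed

lemma ln_integrable:
  assumes "0 < a" shows "set_integrable lborel {a..b} (\<lambda>x. 1 / x :: real)"
  using assms by (intro borel_integrable_atLeastAtMost' continuous_intros) auto

lemma no_inv_bound:
  fixes F :: "real \<Rightarrow> real"
  assumes "0 < d" "0 < c" "set_integrable lborel {0<..<d} F"
    and "\<And>x. 0 < x \<Longrightarrow> x < d \<Longrightarrow> c / x \<le> F x"
  shows False
proof -
  define I where "I = (LINT x:{0<..<d}|lborel. F x)"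
  have bnd: "c * (ln (d/2) - ln e) \<le> I" if "0 < e" "e \<le> d/2" for e
  proof -
    have "c * (ln (d/2) - ln e) = c * (LINT x:{e..d/2}|lborel. 1 / x)"
      by (simp only: ln_int[OF that])
    also have "\<dots> = (LINT x:{e..d/2}|lborel. c * (1 / x))"
      by (rule set_integral_mult_right[symmetric])
    also have "\<dots> \<le> (LINT x:{e..d/2}|lborel. F x)"
    proof (rule set_integral_mono)
      show "set_integrable lborel {e..d/2} (\<lambda>x. c * (1 / x))"
        using ln_integrable[OF that(1)] by (rule set_integrable_mult_right)
      show "set_integrable lborel {e..d/2} F"
        by (rule set_integrable_subset[OF assms(3)]) (use that assms in auto)
      fix x assume "x \<in> {e..d/2}"
      then show "c * (1 / x) \<le> F x" using assms(4)[of x] that by auto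
    qed
    also have "\<dots> \<le> I" unfolding I_def
    proof (rule set_integral_mono_set[OF assms(3)])
      show "{e..d/2} \<subseteq> {0<..<d}" using that assms by auto
      fix x assume "x \<in> {0<..<d}"
      then show "0 \<le> F x" using assms(4)[of x] assms(2) by (smt (verit) divide_pos_pos greaterThanLessThan_iff)
    qed simp
    finally show ?thesis .
  qed
  define e where "e = (d/2) * exp (- (\<bar>I\<bar> + 1) / c)"
  have e0: "0 < e" using assms by (simp add: e_def)
  have "- (\<bar>I\<bar> + 1) / c \<le> 0" using assms by (intro divide_nonpos_pos) auto
  then have "exp (- (\<bar>I\<bar> + 1) / c) \<le> 1" by simp
  then have e1: "e \<le> d/2" using assms unfolding e_def
    by (simp add: mult_left_le)
  have "ln e = ln (d/2) + ln (exp (- (\<bar>I\<bar> + 1) / c))" unfolding e_def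
    using assms by (intro ln_mult_pos) auto
  then have "ln e = ln (d/2) - (\<bar>I\<bar> + 1) / c" using assms by (simp add: field_simps)
  then have "c * (ln (d/2) - ln e) = \<bar>I\<bar> + 1" using assms by simp
  then show False using bnd[OF e0 e1] by simp
qed

lemma domA_D:
  assumes "domA l f h"
  shows "L2on {0<..<l} f" "L2on {0<..<l} h" "\<And>x. 0 < x \<Longrightarrow> x < l \<Longrightarrow> f differentiable (at x)"
    "continuous (at_left l) f" "f l = 0"
    "set_integrable lborel {0<..<l} (\<lambda>x. x * (deriv f x)\<^sup>2)"
    "L2on {0<..<l} (\<lambda>x. x * deriv f x)"
    "\<And>x y. 0 < x \<Longrightarrow> x \<le> y \<Longrightarrow> y < l \<Longrightarrow>
        y * deriv f y - x * deriv f x = (LINT s:{x..y}|lborel. h s)"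
  using assms unfolding domA_def L2_eq by auto

lemma L2on_const:
  fixes a b c :: real
  shows "L2on {a..b} (\<lambda>x. c)"
proof (rule L2on_I)
  show "(\<lambda>x. indicator {a..b} x * c) \<in> borel_measurable lborel" by measurable
  have "integrable lborel (\<lambda>x. c\<^sup>2 * indicator {a..b} x :: real)"
    by (intro integrable_mult_right integrable_real_indicator) (auto simp: emeasure_lborel_Icc_eq)
  moreover have "\<And>x. (indicator {a..b} x * c)\<^sup>2 = c\<^sup>2 * indicator {a..b} x"
    by (simp add: indicator_def)
  ultimately show "integrable lborel (\<lambda>x. (indicator {a..b} x * c)\<^sup>2)"
    by (simp only:)
qed

lemma amgm_deriv:
  fixes s d :: real
  assumes "0 < s"
  shows "\<bar>d\<bar> \<le> (s * d\<^sup>2 + 1 / s) / 2"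
proof -
  have "0 \<le> (s * \<bar>d\<bar> - 1)\<^sup>2" by simp
  then have "2 * s * \<bar>d\<bar> \<le> s\<^sup>2 * d\<^sup>2 + 1" by (simp add: power2_eq_square algebra_simps)
  then have "2 * s * \<bar>d\<bar> / s \<le> (s\<^sup>2 * d\<^sup>2 + 1) / s" using assms by (intro divide_right_mono) auto
  moreover have "(s\<^sup>2 * d\<^sup>2 + 1) / s = s * d\<^sup>2 + 1 / s" using assms
    by (simp add: power2_eq_square field_simps)
  ultimately show ?thesis using assms by simp
qed

lemma deriv_meas:
  assumes "domA l f h" "0 < a" "b < l"
  shows "(\<lambda>x. indicator {a..b} x * deriv f x) \<in> borel_measurable lborel"
proof -
  have m: "(\<lambda>x. indicator {0<..<l} x * (x * deriv f x)) \<in> borel_measurable lborel"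
    using L2on_D(1)[OF domA_D(7)[OF assms(1)]] .
  have e: "indicator {a..b} x * deriv f x = indicator {a..b} x * (1 / x) * (indicator {0<..<l} x * (x * deriv f x))" for x
    using assms by (auto simp: indicator_def)
  show ?thesis unfolding e using m by measurable
qed

lemma deriv_integrable:
  assumes "domA l f h" "0 < a" "b < l"
  shows "set_integrable lborel {a..b} (deriv f)"
    "set_integrable lborel {a..b} (\<lambda>x. \<bar>deriv f x\<bar>)"
    "set_integrable lborel {a..b} (\<lambda>x. (x * (deriv f x)\<^sup>2 + 1 / x) / 2)"
proof -
  have i1: "set_integrable lborel {a..b} (\<lambda>x. x * (deriv f x)\<^sup>2)"
    by (rule set_integrable_subset[OF domA_D(6)[OF assms(1)]]) (use assms in auto)
  have i2: "set_integrable lborel {a..b} (\<lambda>x. 1 / x)" using ln_integrable[OF assms(2)] .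
  show i3: "set_integrable lborel {a..b} (\<lambda>x. (x * (deriv f x)\<^sup>2 + 1 / x) / 2)"
    using i1 i2 by (intro set_integrable_divide set_integral_add)
  show i4: "set_integrable lborel {a..b} (deriv f)"
    unfolding set_integrable_def
  proof (rule Bochner_Integration.integrable_bound)
    show "integrable lborel (\<lambda>x. indicator {a..b} x *\<^sub>R ((x * (deriv f x)\<^sup>2 + 1 / x) / 2))"
      using i3 unfolding set_integrable_def .
    show "(\<lambda>x. indicator {a..b} x *\<^sub>R deriv f x) \<in> borel_measurable lborel"
      using deriv_meas[OF assms] by simp
    show "AE x in lborel. norm (indicator {a..b} x *\<^sub>R deriv f x)
        \<le> norm (indicator {a..b} x *\<^sub>R ((x * (deriv f x)\<^sup>2 + 1 / x) / 2))"
    proof (rule AE_I2)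
      fix x
      show "norm (indicator {a..b} x *\<^sub>R deriv f x)
        \<le> norm (indicator {a..b} x *\<^sub>R ((x * (deriv f x)\<^sup>2 + 1 / x) / 2))"
      proof (cases "x \<in> {a..b}")
        case True
        then have "x > 0" using assms by auto
        then have "\<bar>deriv f x\<bar> \<le> (x * (deriv f x)\<^sup>2 + 1 / x) / 2" by (rule amgm_deriv)
        then show ?thesis using True by (simp add: indicator_def)
      qed (auto simp: indicator_def)
    qed
  qed
  then show "set_integrable lborel {a..b} (\<lambda>x. \<bar>deriv f x\<bar>)"
    by (rule set_integrable_abs)
qed

lemma ftc_domA:
  assumes "domA l f h" "0 < a" "a \<le> b" "b < l"
  shows "(LINT x:{a..b}|lborel. deriv f x) = f b - f a"
proof -
  have "(deriv f has_integral f b - f a) {a..b}"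
  proof (rule fundamental_theorem_of_calculus[OF assms(3)])
    fix x assume "x \<in> {a..b}"
    then have "f differentiable (at x)" using domA_D(3)[OF assms(1)] assms by auto
    then have "(f has_real_derivative deriv f x) (at x)" by (simp add: DERIV_deriv_iff_real_differentiable)
    then show "(f has_vector_derivative deriv f x) (at x within {a..b})"
      by (simp add: has_real_derivative_iff_has_vector_derivative has_vector_derivative_at_within)
  qed
  moreover have "(LINT x:{a..b}|lborel. deriv f x) = integral {a..b} (deriv f)"
    using set_borel_integral_eq_integral(2)[OF deriv_integrable(1)[OF assms(1,2,4)]] .
  ultimately show ?thesis by (simp add: integral_unique)
qed

lemma int_one_Icc: "a \<le> b \<Longrightarrow> (LINT x:{a..b}|lborel. (1::real)) = b - a"
  by (subst set_integral_const) (auto simp: emeasure_lborel_Icc_eq)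

lemma w_small:
  assumes "domA l f h" "0 < l"
  shows "\<exists>K. \<forall>x. 0 < x \<longrightarrow> x < l \<longrightarrow> \<bar>x * deriv f x\<bar> \<le> K * sqrt x"
proof -
  define w where "w x = x * deriv f x" for x
  define S where "S = (LINT x:{0<..<l}|lborel. (h x)\<^sup>2)"
  have inc: "\<bar>w x - w x'\<bar> \<le> sqrt S * sqrt x" if "0 < x'" "x' \<le> x" "x < l" for x x'
  proof -
    have q: "w x - w x' = (LINT s:{x'..x}|lborel. h s)"
      using domA_D(8)[OF assms(1) that] by (simp add: w_def)
    have sub: "{x'..x} \<subseteq> {0<..<l}" using that by auto
    have Lh: "L2on {x'..x} h" by (rule L2on_subset[OF domA_D(2)[OF assms(1)] sub]) simp
    have "(LINT s:{x'..x}|lborel. h s * 1)\<^sup>2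
        \<le> (LINT s:{x'..x}|lborel. (h s)\<^sup>2) * (LINT s:{x'..x}|lborel. (1::real)\<^sup>2)"
      by (rule L2on_CS[OF Lh L2on_const])
    also have "(LINT s:{x'..x}|lborel. (1::real)\<^sup>2) = x - x'" using int_one_Icc[OF that(2)] by simp
    also have "(LINT s:{x'..x}|lborel. (h s)\<^sup>2) \<le> S" unfolding S_def
      by (rule set_integral_mono_set) (use domA_D(2)[OF assms(1)] sub in \<open>auto simp: L2on_def\<close>)
    then have "(LINT s:{x'..x}|lborel. (h s)\<^sup>2) * (x - x') \<le> S * x"
      using that L2on_sq_nonneg[of "{x'..x}" h]
      by (intro mult_mono) (auto simp: S_def intro: order_trans[OF L2on_sq_nonneg])
    finally have "(w x - w x')\<^sup>2 \<le> S * x" using q by simp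
    then have "sqrt ((w x - w x')\<^sup>2) \<le> sqrt (S * x)" by (rule real_sqrt_le_mono)
    then show ?thesis by (simp add: real_sqrt_mult)
  qed
  have small: "\<exists>x'. 0 < x' \<and> x' \<le> x \<and> \<bar>w x'\<bar> < e" if "0 < x" "x < l" "0 < e" for x e
  proof (rule ccontr)
    assume "\<not> ?thesis"
    then have ge: "\<And>s. 0 < s \<Longrightarrow> s \<le> x \<Longrightarrow> e \<le> \<bar>w s\<bar>" by force
    show False
    proof (rule no_inv_bound[of x "e\<^sup>2" "\<lambda>s. s * (deriv f s)\<^sup>2"])
      show "0 < x" "0 < e\<^sup>2" using that by auto
      show "set_integrable lborel {0<..<x} (\<lambda>s. s * (deriv f s)\<^sup>2)"
        by (rule set_integrable_subset[OF domA_D(6)[OF assms(1)]]) (use that in auto)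
      fix s assume s: "0 < s" "s < x"
      have "e\<^sup>2 \<le> (w s)\<^sup>2" using ge[of s] s that by (simp add: abs_le_square_iff[symmetric])
      then have "e\<^sup>2 \<le> s * (s * (deriv f s)\<^sup>2)" by (simp add: w_def power2_eq_square algebra_simps)
      then show "e\<^sup>2 / s \<le> s * (deriv f s)\<^sup>2" using s by (simp add: divide_le_eq mult.commute)
    qed
  qed
  have "\<bar>w x\<bar> \<le> sqrt S * sqrt x" if xx: "0 < x" "x < l" for x
  proof (rule field_le_epsilon)
    fix e :: real assume "0 < e"
    obtain x' where x': "0 < x'" "x' \<le> x" "\<bar>w x'\<bar> < e" using small[OF xx \<open>0 < e\<close>] by auto
    have "\<bar>w x - w x'\<bar> \<le> sqrt S * sqrt x" using inc[OF x'(1,2) xx(2)] .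
    then show "\<bar>w x\<bar> \<le> sqrt S * sqrt x + e" using x'(3) by linarith
  qed
  then show ?thesis unfolding w_def by blast
qed

lemma g_log:
  assumes "domA l g h" "0 < l" "0 < x" "x \<le> l/2"
  shows "\<bar>g x\<bar> \<le> \<bar>g (l/2)\<bar> + ((LINT s:{0<..<l}|lborel. s * (deriv g s)\<^sup>2) + (ln (l/2) - ln x)) / 2"
proof -
  have ll: "l/2 < l" using assms by simp
  have "g (l/2) - g x = (LINT s:{x..l/2}|lborel. deriv g s)"
    using ftc_domA[OF assms(1,3,4) ll] by simp
  then have "\<bar>g (l/2) - g x\<bar> \<le> (LINT s:{x..l/2}|lborel. \<bar>deriv g s\<bar>)"
    using set_integral_norm_bound[OF deriv_integrable(1)[OF assms(1,3) ll]] by simp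
  also have "\<dots> \<le> (LINT s:{x..l/2}|lborel. (s * (deriv g s)\<^sup>2 + 1 / s) / 2)"
    by (rule set_integral_mono[OF deriv_integrable(2,3)[OF assms(1,3) ll]])
       (use assms amgm_deriv in \<open>auto\<close>)
  also have "\<dots> = ((LINT s:{x..l/2}|lborel. s * (deriv g s)\<^sup>2) + (LINT s:{x..l/2}|lborel. 1 / s)) / 2"
  proof -
    have "set_integrable lborel {x..l/2} (\<lambda>s. s * (deriv g s)\<^sup>2)"
      by (rule set_integrable_subset[OF domA_D(6)[OF assms(1)]]) (use assms in auto)
    then show ?thesis using ln_integrable[OF assms(3)] by (simp add: set_integral_add(2))
  qed
  also have "(LINT s:{x..l/2}|lborel. 1 / s) = ln (l/2) - ln x" using ln_int assms by simp
  finally have A: "\<bar>g (l/2) - g x\<bar> \<le> ((LINT s:{x..l/2}|lborel. s * (deriv g s)\<^sup>2) + (ln (l/2) - ln x)) / 2" .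
  have B: "(LINT s:{x..l/2}|lborel. s * (deriv g s)\<^sup>2) \<le> (LINT s:{0<..<l}|lborel. s * (deriv g s)\<^sup>2)"
  proof (rule set_integral_mono_set[OF domA_D(6)[OF assms(1)]])
    show "{x..l/2} \<subseteq> {0<..<l}" using assms by auto
  qed auto
  have C: "\<bar>g x\<bar> \<le> \<bar>g (l/2)\<bar> + \<bar>g (l/2) - g x\<bar>" by arith
  have D: "((LINT s:{x..l/2}|lborel. s * (deriv g s)\<^sup>2) + (ln (l/2) - ln x)) / 2
     \<le> ((LINT s:{0<..<l}|lborel. s * (deriv g s)\<^sup>2) + (ln (l/2) - ln x)) / 2" using B by simp
  from A C D show ?thesis by linarith
qed

lemma w_bdd_right:
  assumes "domA l f h" "0 < l"
  shows "\<exists>K. \<forall>y. l/2 \<le> y \<longrightarrow> y < l \<longrightarrow> \<bar>y * deriv f y\<bar> \<le> K"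
proof -
  have ih: "set_integrable lborel {0<..<l} (\<lambda>x. \<bar>h x\<bar>)"
    by (intro set_integrable_abs L2on_integrable[OF domA_D(2)[OF assms(1)]]) (use assms in auto)
  have "\<bar>y * deriv f y\<bar> \<le> \<bar>(l/2) * deriv f (l/2)\<bar> + (LINT x:{0<..<l}|lborel. \<bar>h x\<bar>)"
    if yy: "l/2 \<le> y" "y < l" for y
  proof -
    have "y * deriv f y - (l/2) * deriv f (l/2) = (LINT s:{l/2..y}|lborel. h s)"
      using domA_D(8)[OF assms(1), of "l/2" y] yy assms by simp
    also have "\<bar>\<dots>\<bar> \<le> (LINT s:{l/2..y}|lborel. \<bar>h s\<bar>)"
    proof -
      have sub: "{l/2..y} \<subseteq> {0<..<l}" using assms yy by auto
      have "set_integrable lborel {l/2..y} h"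
        by (rule set_integrable_subset[OF L2on_integrable[OF domA_D(2)[OF assms(1)]]])
           (use assms sub in auto)
      from set_integral_norm_bound[OF this] show ?thesis by simp
    qed
    also have "\<dots> \<le> (LINT x:{0<..<l}|lborel. \<bar>h x\<bar>)"
      by (rule set_integral_mono_set[OF ih]) (use assms yy in auto)
    finally show ?thesis by linarith
  qed
  then show ?thesis by blast
qed

lemma fubini_tri:
  fixes H D :: "real \<Rightarrow> real"
  assumes iH: "integrable lborel (\<lambda>s. indicator {x..y} s * H s)"
    and iD: "integrable lborel (\<lambda>r. indicator {x..y} r * D r)"
  shows "(\<integral>s. indicator {x..y} s * (H s * (\<integral>r. indicator {s..y} r * D r \<partial>lborel)) \<partial>lborel)
       = (\<integral>r. indicator {x..y} r * (D r * (\<integral>s. indicator {x..r} s * H s \<partial>lborel)) \<partial>lborel)"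
proof -
  define H' where "H' s = indicator {x..y} s * H s" for s
  define D' where "D' r = indicator {x..y} r * D r" for r
  have mH[measurable]: "H' \<in> borel_measurable lborel"
    using borel_measurable_integrable[OF iH] by (simp add: H'_def[abs_def])
  have mD[measurable]: "D' \<in> borel_measurable lborel"
    using borel_measurable_integrable[OF iD] by (simp add: D'_def[abs_def])
  have iH': "integrable lborel H'" using iH by (simp add: H'_def[abs_def])
  have iD': "integrable lborel D'" using iD by (simp add: D'_def[abs_def])
  define F where "F s r = (if s \<le> r then H' s * D' r else 0)" for s r
  have iG: "integrable (lborel \<Otimes>\<^sub>M lborel) (\<lambda>(s, r). \<bar>H' s\<bar> * \<bar>D' r\<bar>)"
  proof (rule lborel_pair.Fubini_integrable)
    show "(\<lambda>(s, r). \<bar>H' s\<bar> * \<bar>D' r\<bar>) \<in> borel_measurable (lborel \<Otimes>\<^sub>M lborel)" by measurable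
    have "integrable lborel (\<lambda>s. \<bar>H' s\<bar> * (\<integral>r. \<bar>D' r\<bar> \<partial>lborel))"
      using iH' by (intro integrable_mult_left integrable_abs)
    then show "integrable lborel (\<lambda>s. \<integral>r. norm (case (s, r) of (s, r) \<Rightarrow> \<bar>H' s\<bar> * \<bar>D' r\<bar>) \<partial>lborel)"
      by (simp add: abs_mult)
    show "AE s in lborel. integrable lborel (\<lambda>r. case (s, r) of (s, r) \<Rightarrow> \<bar>H' s\<bar> * \<bar>D' r\<bar>)"
      using iD' by (intro AE_I2) (simp add: integrable_abs)
  qed
  have iF: "integrable (lborel \<Otimes>\<^sub>M lborel) (\<lambda>(s, r). F s r)"
  proof (rule Bochner_Integration.integrable_bound[OF iG])
    show "(\<lambda>(s, r). F s r) \<in> borel_measurable (lborel \<Otimes>\<^sub>M lborel)"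
      unfolding F_def by measurable
    show "AE p in lborel \<Otimes>\<^sub>M lborel. norm (case p of (s, r) \<Rightarrow> F s r) \<le> norm (case p of (s, r) \<Rightarrow> \<bar>H' s\<bar> * \<bar>D' r\<bar>)"
      by (intro AE_I2) (auto simp: F_def abs_mult)
  qed
  have e1: "F s r = indicator {x..y} s * H s * (indicator {s..y} r * D r)" for s r
    by (auto simp: F_def H'_def D'_def indicator_def)
  have e2: "F s r = indicator {x..y} r * D r * (indicator {x..r} s * H s)" for s r
    by (auto simp: F_def H'_def D'_def indicator_def)
  have "(\<integral>s. (\<integral>r. F s r \<partial>lborel) \<partial>lborel) = (\<integral>r. (\<integral>s. F s r \<partial>lborel) \<partial>lborel)"
    using lborel_pair.integral_fst[OF iF] lborel_pair.integral_snd[OF iF] by simp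
  moreover have "(\<lambda>s. \<integral>r. F s r \<partial>lborel) = (\<lambda>s. indicator {x..y} s * (H s * (\<integral>r. indicator {s..y} r * D r \<partial>lborel)))"
    unfolding e1 by (simp add: mult.assoc)
  moreover have "(\<lambda>r. \<integral>s. F s r \<partial>lborel) = (\<lambda>r. indicator {x..y} r * (D r * (\<integral>s. indicator {x..r} s * H s \<partial>lborel)))"
    unfolding e2 by (simp add: mult.assoc)
  ultimately show ?thesis by simp
qed

lemma ibp:
  assumes A: "domA l f hf" "domA l g hg" and xy: "0 < x" "x \<le> y" "y < l"
  shows "(LINT s:{x..y}|lborel. hf s * g s)
       = y * deriv f y * g y - x * deriv f x * g x - (LINT s:{x..y}|lborel. s * deriv f s * deriv g s)"
proof -
  have sub: "{x..y} \<subseteq> {0<..<l}" using xy by auto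
  have l0: "0 < l" using xy by simp
  have ihf: "set_integrable lborel {x..y} hf"
    by (rule set_integrable_subset[OF L2on_integrable[OF domA_D(2)[OF A(1)]]]) (use sub l0 in auto)
  have idg: "set_integrable lborel {x..y} (deriv g)" by (rule deriv_integrable(1)[OF A(2) xy(1,3)])
  have ihg: "set_integrable lborel {x..y} (\<lambda>s. hf s * g s)"
    by (rule set_integrable_subset[OF L2on_prod[OF domA_D(2)[OF A(1)] domA_D(1)[OF A(2)]]])
       (use sub in auto)
  have iwd: "set_integrable lborel {x..y} (\<lambda>s. s * deriv f s * deriv g s)"
    unfolding set_integrable_def
  proof (rule Bochner_Integration.integrable_bound)
    have "set_integrable lborel {x..y} (\<lambda>s. (s * (deriv f s)\<^sup>2 + s * (deriv g s)\<^sup>2) / 2)"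
      using set_integrable_subset[OF domA_D(6)[OF A(1)], of "{x..y}"]
        set_integrable_subset[OF domA_D(6)[OF A(2)], of "{x..y}"] sub
      by (intro set_integrable_divide set_integral_add) auto
    then show "integrable lborel (\<lambda>s. indicator {x..y} s *\<^sub>R ((s * (deriv f s)\<^sup>2 + s * (deriv g s)\<^sup>2) / 2))"
      unfolding set_integrable_def .
    have e: "indicator {x..y} s *\<^sub>R (s * deriv f s * deriv g s)
        = s * (indicator {x..y} s * deriv f s) * (indicator {x..y} s * deriv g s)" for s
      by (simp add: indicator_def)
    show "(\<lambda>s. indicator {x..y} s *\<^sub>R (s * deriv f s * deriv g s)) \<in> borel_measurable lborel"
      unfolding e using deriv_meas[OF A(1) xy(1,3)] deriv_meas[OF A(2) xy(1,3)] by measurable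
    show "AE s in lborel. norm (indicator {x..y} s *\<^sub>R (s * deriv f s * deriv g s))
        \<le> norm (indicator {x..y} s *\<^sub>R ((s * (deriv f s)\<^sup>2 + s * (deriv g s)\<^sup>2) / 2))"
    proof (rule AE_I2)
      fix s
      show "norm (indicator {x..y} s *\<^sub>R (s * deriv f s * deriv g s))
        \<le> norm (indicator {x..y} s *\<^sub>R ((s * (deriv f s)\<^sup>2 + s * (deriv g s)\<^sup>2) / 2))"
      proof (cases "s \<in> {x..y}")
        case True
        then have s0: "s > 0" using xy by auto
        have "0 \<le> (\<bar>deriv f s\<bar> - \<bar>deriv g s\<bar>)\<^sup>2" by simp
        then have "2 * (\<bar>deriv f s\<bar> * \<bar>deriv g s\<bar>) \<le> (deriv f s)\<^sup>2 + (deriv g s)\<^sup>2"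
          by (simp add: power2_eq_square algebra_simps)
        then have "s * (2 * (\<bar>deriv f s\<bar> * \<bar>deriv g s\<bar>)) \<le> s * ((deriv f s)\<^sup>2 + (deriv g s)\<^sup>2)"
          using s0 by (intro mult_left_mono) auto
        then have "\<bar>s * deriv f s * deriv g s\<bar> \<le> (s * (deriv f s)\<^sup>2 + s * (deriv g s)\<^sup>2) / 2"
          using s0 by (simp add: abs_mult algebra_simps)
        moreover have "0 \<le> (s * (deriv f s)\<^sup>2 + s * (deriv g s)\<^sup>2) / 2" using s0 by simp
        ultimately show ?thesis using True by (simp add: indicator_def)
      qed (auto simp: indicator_def)
    qed
  qed
  have ftc_g: "g y - g s = (LINT r:{s..y}|lborel. deriv g r)" if "s \<in> {x..y}" for s
    using ftc_domA[OF A(2), of s y] that xy by simp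
  have wd: "r * deriv f r - x * deriv f x = (LINT s:{x..r}|lborel. hf s)" if "r \<in> {x..y}" for r
    using domA_D(8)[OF A(1), of x r] that xy by simp
  have fub: "(LINT s:{x..y}|lborel. hf s * (LINT r:{s..y}|lborel. deriv g r))
      = (LINT r:{x..y}|lborel. deriv g r * (LINT s:{x..r}|lborel. hf s))"
    using fubini_tri[of x y hf "deriv g"] ihf idg
    by (simp add: set_lebesgue_integral_def set_integrable_def)
  have c1: "(LINT s:{x..y}|lborel. hf s * (LINT r:{s..y}|lborel. deriv g r))
      = (LINT s:{x..y}|lborel. g y * hf s - hf s * g s)"
    by (rule set_lebesgue_integral_cong) (auto simp: ftc_g[symmetric] algebra_simps)
  have c2: "(LINT r:{x..y}|lborel. deriv g r * (LINT s:{x..r}|lborel. hf s))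
      = (LINT r:{x..y}|lborel. r * deriv f r * deriv g r - (x * deriv f x) * deriv g r)"
    by (rule set_lebesgue_integral_cong) (auto simp: wd[symmetric] algebra_simps)
  have c3: "(LINT s:{x..y}|lborel. g y * hf s - hf s * g s)
      = g y * (LINT s:{x..y}|lborel. hf s) - (LINT s:{x..y}|lborel. hf s * g s)"
    using ihf ihg by (simp add: set_integral_diff(2) set_integrable_mult_right)
  have c4: "(LINT r:{x..y}|lborel. r * deriv f r * deriv g r - (x * deriv f x) * deriv g r)
      = (LINT r:{x..y}|lborel. r * deriv f r * deriv g r) - (x * deriv f x) * (LINT r:{x..y}|lborel. deriv g r)"
    using iwd idg by (simp add: set_integral_diff(2) set_integrable_mult_right)
  have c5: "(LINT s:{x..y}|lborel. hf s) = y * deriv f y - x * deriv f x" using wd[of y] xy by simp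
  have c6: "(LINT r:{x..y}|lborel. deriv g r) = g y - g x" using ftc_domA[OF A(2) xy(1,2,3)] .
  from fub c1 c2 c3 c4 c5 c6 show ?thesis by (simp add: algebra_simps)
qed

lemma green_interval:
  assumes A: "domA l f hf" "domA l g hg" and xy: "0 < x" "x \<le> y" "y < l"
  shows "(LINT s:{x..y}|lborel. hf s * g s - f s * hg s)
       = (y * deriv f y * g y - f y * (y * deriv g y)) - (x * deriv f x * g x - f x * (x * deriv g x))"
proof -
  have sub: "{x..y} \<subseteq> {0<..<l}" using xy by auto
  have i1: "set_integrable lborel {x..y} (\<lambda>s. hf s * g s)"
    by (rule set_integrable_subset[OF L2on_prod[OF domA_D(2)[OF A(1)] domA_D(1)[OF A(2)]]])
       (use sub in auto)
  have i2: "set_integrable lborel {x..y} (\<lambda>s. f s * hg s)"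
    by (rule set_integrable_subset[OF L2on_prod[OF domA_D(1)[OF A(1)] domA_D(2)[OF A(2)]]])
       (use sub in auto)
  have "(LINT s:{x..y}|lborel. hf s * g s - f s * hg s)
      = (LINT s:{x..y}|lborel. hf s * g s) - (LINT s:{x..y}|lborel. hg s * f s)"
    using i1 i2 by (simp add: set_integral_diff(2) mult.commute)
  also have "\<dots> = (y * deriv f y * g y - x * deriv f x * g x - (LINT s:{x..y}|lborel. s * deriv f s * deriv g s))
      - (y * deriv g y * f y - x * deriv g x * f x - (LINT s:{x..y}|lborel. s * deriv g s * deriv f s))"
    using ibp[OF A(1,2) xy] ibp[OF A(2,1) xy] by simp
  also have "(LINT s:{x..y}|lborel. s * deriv g s * deriv f s) = (LINT s:{x..y}|lborel. s * deriv f s * deriv g s)"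
    by (simp add: mult.commute mult.left_commute)
  finally show ?thesis by (simp add: algebra_simps)
qed

lemma lim_sqrt_ln: "((\<lambda>x::real. sqrt x * ln x) \<longlongrightarrow> 0) (at_right 0)"
  by real_asymp

lemma lim_sqrt: "((\<lambda>x::real. sqrt x) \<longlongrightarrow> 0) (at_right 0)"
  by real_asymp

lemma B_lim0:
  assumes A: "domA l f hf" "domA l g hg" and l0: "0 < l"
  shows "((\<lambda>x. x * deriv f x * g x - f x * (x * deriv g x)) \<longlongrightarrow> 0) (at_right 0)"
proof -
  obtain Kf where Kf: "\<And>x. 0 < x \<Longrightarrow> x < l \<Longrightarrow> \<bar>x * deriv f x\<bar> \<le> Kf * sqrt x"
    using w_small[OF A(1) l0] by blast
  obtain Kg where Kg: "\<And>x. 0 < x \<Longrightarrow> x < l \<Longrightarrow> \<bar>x * deriv g x\<bar> \<le> Kg * sqrt x"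
    using w_small[OF A(2) l0] by blast
  define Mf where "Mf = (LINT s:{0<..<l}|lborel. s * (deriv f s)\<^sup>2)"
  define Mg where "Mg = (LINT s:{0<..<l}|lborel. s * (deriv g s)\<^sup>2)"
  define bf where "bf x = \<bar>f (l/2)\<bar> + (Mf + (ln (l/2) - ln x)) / 2" for x
  define bg where "bg x = \<bar>g (l/2)\<bar> + (Mg + (ln (l/2) - ln x)) / 2" for x
  have bf: "\<And>x. 0 < x \<Longrightarrow> x \<le> l/2 \<Longrightarrow> \<bar>f x\<bar> \<le> bf x"
    using g_log[OF A(1) l0] unfolding bf_def Mf_def by blast
  have bg: "\<And>x. 0 < x \<Longrightarrow> x \<le> l/2 \<Longrightarrow> \<bar>g x\<bar> \<le> bg x"
    using g_log[OF A(2) l0] unfolding bg_def Mg_def by blast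
  define R where "R x = Kf * sqrt x * bg x + bf x * (Kg * sqrt x)" for x
  have ev: "eventually (\<lambda>x. norm (x * deriv f x * g x - f x * (x * deriv g x)) \<le> R x) (at_right 0)"
    unfolding eventually_at_right_field
  proof (intro exI[of _ "l/2"] conjI allI impI)
    show "0 < l/2" using l0 by simp
    fix x :: real assume x: "0 < x" "x < l/2"
    have a1: "\<bar>x * deriv f x * g x\<bar> \<le> Kf * sqrt x * bg x"
      unfolding abs_mult[of "x * deriv f x"]
      by (rule mult_mono) (use Kf[of x] bg[of x] x in auto)
    have a2: "\<bar>f x * (x * deriv g x)\<bar> \<le> bf x * (Kg * sqrt x)"
      unfolding abs_mult[of "f x"]
      by (rule mult_mono) (use bf[of x] Kg[of x] x in auto)
    show "norm (x * deriv f x * g x - f x * (x * deriv g x)) \<le> R x"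
      using a1 a2 unfolding R_def by simp
  qed
  have "R x = (Kf * (\<bar>g (l/2)\<bar> + (Mg + ln (l/2)) / 2) + Kg * (\<bar>f (l/2)\<bar> + (Mf + ln (l/2)) / 2)) * sqrt x
     - ((Kf + Kg) / 2) * (sqrt x * ln x)" for x
    unfolding R_def bf_def bg_def by (simp add: algebra_simps add_divide_distrib diff_divide_distrib)
  then have "R = (\<lambda>x. (Kf * (\<bar>g (l/2)\<bar> + (Mg + ln (l/2)) / 2) + Kg * (\<bar>f (l/2)\<bar> + (Mf + ln (l/2)) / 2)) * sqrt x
     - ((Kf + Kg) / 2) * (sqrt x * ln x))" by auto
  moreover have "((\<lambda>x. (Kf * (\<bar>g (l/2)\<bar> + (Mg + ln (l/2)) / 2) + Kg * (\<bar>f (l/2)\<bar> + (Mf + ln (l/2)) / 2)) * sqrt x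
     - ((Kf + Kg) / 2) * (sqrt x * ln x)) \<longlongrightarrow> 0) (at_right 0)"
  proof -
    have gen: "\<And>c d. ((\<lambda>x. c * sqrt x - d * (sqrt x * ln x)) \<longlongrightarrow> 0) (at_right 0)"
      using tendsto_diff[OF tendsto_mult_right_zero[OF lim_sqrt] tendsto_mult_right_zero[OF lim_sqrt_ln]]
      by simp
    show ?thesis by (rule gen)
  qed
  ultimately have "(R \<longlongrightarrow> 0) (at_right 0)" by simp
  then show ?thesis by (rule Lim_null_comparison[OF ev])
qed

lemma B_liml:
  assumes A: "domA l f hf" "domA l g hg" and l0: "0 < l"
  shows "((\<lambda>x. x * deriv f x * g x - f x * (x * deriv g x)) \<longlongrightarrow> 0) (at_left l)"
proof -
  obtain Wf where Wf: "\<And>y. l/2 \<le> y \<Longrightarrow> y < l \<Longrightarrow> \<bar>y * deriv f y\<bar> \<le> Wf"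
    using w_bdd_right[OF A(1) l0] by blast
  obtain Wg where Wg: "\<And>y. l/2 \<le> y \<Longrightarrow> y < l \<Longrightarrow> \<bar>y * deriv g y\<bar> \<le> Wg"
    using w_bdd_right[OF A(2) l0] by blast
  have ff: "(f \<longlongrightarrow> 0) (at_left l)"
    using domA_D(4,5)[OF A(1)] by (simp add: continuous_within)
  have gg: "(g \<longlongrightarrow> 0) (at_left l)"
    using domA_D(4,5)[OF A(2)] by (simp add: continuous_within)
  have ev: "eventually (\<lambda>y. norm (y * deriv f y * g y - f y * (y * deriv g y)) \<le> Wf * \<bar>g y\<bar> + \<bar>f y\<bar> * Wg) (at_left l)"
    unfolding eventually_at_left_field
  proof (intro exI[of _ "l/2"] conjI allI impI)
    show "l/2 < l" using l0 by simp
    fix y :: real assume y: "l/2 < y" "y < l"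
    have a1: "\<bar>y * deriv f y * g y\<bar> \<le> Wf * \<bar>g y\<bar>"
      unfolding abs_mult[of "y * deriv f y"]
      by (rule mult_right_mono) (use Wf[of y] y in auto)
    have a2: "\<bar>f y * (y * deriv g y)\<bar> \<le> \<bar>f y\<bar> * Wg"
      unfolding abs_mult[of "f y"]
      by (rule mult_left_mono) (use Wg[of y] y in auto)
    show "norm (y * deriv f y * g y - f y * (y * deriv g y)) \<le> Wf * \<bar>g y\<bar> + \<bar>f y\<bar> * Wg"
      using a1 a2 by simp
  qed
  have "((\<lambda>y. Wf * \<bar>g y\<bar> + \<bar>f y\<bar> * Wg) \<longlongrightarrow> Wf * \<bar>0\<bar> + \<bar>0\<bar> * Wg) (at_left l)"
    by (intro tendsto_intros ff gg)
  then have "((\<lambda>y. Wf * \<bar>g y\<bar> + \<bar>f y\<bar> * Wg) \<longlongrightarrow> 0) (at_left l)" by simp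
  then show ?thesis by (rule Lim_null_comparison[OF ev])
qed

lemma green:
  assumes A: "domA l f hf" "domA l g hg" and l0: "0 < l"
  shows "(LINT s:{0<..<l}|lborel. hf s * g s) = (LINT s:{0<..<l}|lborel. f s * hg s)"
proof -
  define Fi where "Fi s = hf s * g s - f s * hg s" for s
  define B where "B x = x * deriv f x * g x - f x * (x * deriv g x)" for x
  have i1: "set_integrable lborel {0<..<l} (\<lambda>s. hf s * g s)"
    by (rule L2on_prod[OF domA_D(2)[OF A(1)] domA_D(1)[OF A(2)]])
  have i2: "set_integrable lborel {0<..<l} (\<lambda>s. f s * hg s)"
    by (rule L2on_prod[OF domA_D(1)[OF A(1)] domA_D(2)[OF A(2)]])
  have iF: "set_integrable lborel {0<..<l} Fi"
    unfolding Fi_def[abs_def] using i1 i2 by (rule set_integral_diff(1))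
  define xs where "xs n = l / (real n + 2)" for n
  define ys where "ys n = l - l / (real n + 2)" for n
  have xs0: "0 < xs n" for n using l0 by (simp add: xs_def)
  have xs1: "xs n \<le> l/2" for n unfolding xs_def using l0 by (intro divide_left_mono) auto
  have ys1: "l/2 \<le> ys n" for n
  proof -
    have "l / (real n + 2) \<le> l / 2" using l0 by (intro divide_left_mono) auto
    then show ?thesis by (simp add: ys_def)
  qed
  have ys2: "ys n < l" for n using l0 by (simp add: ys_def)
  have xs_lim: "xs \<longlonglongrightarrow> 0" unfolding xs_def by real_asymp
  have ys_lim: "ys \<longlonglongrightarrow> l" unfolding ys_def by real_asymp
  have int_n: "(LINT s:{xs n..ys n}|lborel. Fi s) = B (ys n) - B (xs n)" for n
    unfolding Fi_def B_def
    by (rule green_interval[OF A xs0]) (use xs1[of n] ys1[of n] ys2[of n] in auto)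
  have lim1: "(\<lambda>n. LINT s:{xs n..ys n}|lborel. Fi s) \<longlonglongrightarrow> (LINT s:{0<..<l}|lborel. Fi s)"
    unfolding set_lebesgue_integral_def
  proof (rule integral_dominated_convergence[where w = "\<lambda>z. \<bar>indicator {0<..<l} z *\<^sub>R Fi z\<bar>"])
    show m: "(\<lambda>z. indicator {0<..<l} z *\<^sub>R Fi z) \<in> borel_measurable lborel"
      using iF unfolding set_integrable_def by (rule borel_measurable_integrable)
    have e: "indicator {xs n..ys n} z *\<^sub>R Fi z = indicator {xs n..ys n} z * (indicator {0<..<l} z *\<^sub>R Fi z)" for n z
    proof (cases "xs n \<le> z \<and> z \<le> ys n")
      case True
      then have "0 < z" "z < l" using xs0[of n] ys2[of n] by linarith+
      then show ?thesis using True by (simp add: indicator_def)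
    next
      case False
      then show ?thesis by (simp add: indicator_def)
    qed
    show "(\<lambda>z. indicator {xs n..ys n} z *\<^sub>R Fi z) \<in> borel_measurable lborel" for n
      unfolding e using m by measurable
    show "integrable lborel (\<lambda>z. \<bar>indicator {0<..<l} z *\<^sub>R Fi z\<bar>)"
      using iF unfolding set_integrable_def by (rule integrable_abs)
    show "AE z in lborel. norm (indicator {xs n..ys n} z *\<^sub>R Fi z) \<le> \<bar>indicator {0<..<l} z *\<^sub>R Fi z\<bar>" for n
    proof (intro AE_I2)
      fix z
      have "\<bar>indicator {xs n..ys n} z * (indicator {0<..<l} z *\<^sub>R Fi z)\<bar> \<le> \<bar>indicator {0<..<l} z *\<^sub>R Fi z\<bar>"
        by (simp add: indicator_def)
      then show "norm (indicator {xs n..ys n} z *\<^sub>R Fi z) \<le> \<bar>indicator {0<..<l} z *\<^sub>R Fi z\<bar>"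
        by (simp only: e real_norm_def)
    qed
    show "AE z in lborel. (\<lambda>n. indicator {xs n..ys n} z *\<^sub>R Fi z) \<longlonglongrightarrow> indicator {0<..<l} z *\<^sub>R Fi z"
    proof (rule AE_I2)
      fix z :: real
      show "(\<lambda>n. indicator {xs n..ys n} z *\<^sub>R Fi z) \<longlonglongrightarrow> indicator {0<..<l} z *\<^sub>R Fi z"
      proof (cases "z \<in> {0<..<l}")
        case True
        have "eventually (\<lambda>n. xs n < z) sequentially"
          using order_tendstoD(2)[OF xs_lim, of z] True by simp
        moreover have "eventually (\<lambda>n. z < ys n) sequentially"
          using order_tendstoD(1)[OF ys_lim, of z] True by simp
        ultimately have "eventually (\<lambda>n. indicator {xs n..ys n} z *\<^sub>R Fi z = indicator {0<..<l} z *\<^sub>R Fi z) sequentially"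
          by eventually_elim (use True in \<open>auto simp: indicator_def\<close>)
        then show ?thesis by (rule tendsto_eventually)
      next
        case False
        have "indicator {xs n..ys n} z *\<^sub>R Fi z = indicator {0<..<l} z *\<^sub>R Fi z" for n
          unfolding e using False by simp
        then have "(\<lambda>n. indicator {xs n..ys n} z *\<^sub>R Fi z) = (\<lambda>n. indicator {0<..<l} z *\<^sub>R Fi z)"
          by (rule ext)
        then show ?thesis by (simp only: tendsto_const)
      qed
    qed
  qed
  have xs_at: "filterlim xs (at_right 0) sequentially"
    by (rule tendsto_imp_filterlim_at_right[OF xs_lim]) (simp add: xs0)
  have ys_at: "filterlim ys (at_left l) sequentially"
    by (rule tendsto_imp_filterlim_at_left[OF ys_lim]) (simp add: ys2)
  have lim2: "(\<lambda>n. B (ys n) - B (xs n)) \<longlonglongrightarrow> 0 - 0"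
  proof (rule tendsto_diff)
    show "(\<lambda>n. B (ys n)) \<longlonglongrightarrow> 0"
      using filterlim_compose[OF B_liml[OF A l0] ys_at] unfolding B_def .
    show "(\<lambda>n. B (xs n)) \<longlonglongrightarrow> 0"
      using filterlim_compose[OF B_lim0[OF A l0] xs_at] unfolding B_def .
  qed
  have "(LINT s:{0<..<l}|lborel. Fi s) = 0"
    using LIMSEQ_unique[OF lim1] lim2 int_n by simp
  then show ?thesis using i1 i2 unfolding Fi_def by (simp add: set_integral_diff(2))
qed

lemma ip_abs:
  assumes "L2on S f" "L2on S g"
  shows "\<bar>LINT x:S|lborel. f x * g x\<bar> \<le> sqrt (LINT x:S|lborel. (f x)\<^sup>2) * sqrt (LINT x:S|lborel. (g x)\<^sup>2)"
proof -
  have "sqrt ((LINT x:S|lborel. f x * g x)\<^sup>2) \<le> sqrt ((LINT x:S|lborel. (f x)\<^sup>2) * (LINT x:S|lborel. (g x)\<^sup>2))"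
    by (rule real_sqrt_le_mono[OF L2on_CS[OF assms]])
  then show ?thesis by (simp add: real_sqrt_mult)
qed

lemma ip_split:
  assumes "L2on S a" "L2on S b" "L2on S a0" "L2on S b0"
  shows "(LINT x:S|lborel. a x * b x) - (LINT x:S|lborel. a0 x * b0 x)
    = (LINT x:S|lborel. (a x - a0 x) * (b x - b0 x)) + (LINT x:S|lborel. (a x - a0 x) * b0 x)
      + (LINT x:S|lborel. a0 x * (b x - b0 x))"
proof -
  have da: "L2on S (\<lambda>x. a x - a0 x)" by (rule L2on_diff[OF assms(1,3)])
  have db: "L2on S (\<lambda>x. b x - b0 x)" by (rule L2on_diff[OF assms(2,4)])
  have i1: "set_integrable lborel S (\<lambda>x. (a x - a0 x) * (b x - b0 x))" by (rule L2on_prod[OF da db])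
  have i2: "set_integrable lborel S (\<lambda>x. (a x - a0 x) * b0 x)" by (rule L2on_prod[OF da assms(4)])
  have i3: "set_integrable lborel S (\<lambda>x. a0 x * (b x - b0 x))" by (rule L2on_prod[OF assms(3) db])
  have i4: "set_integrable lborel S (\<lambda>x. a0 x * b0 x)" by (rule L2on_prod[OF assms(3,4)])
  have e: "\<And>x. a x * b x = ((a x - a0 x) * (b x - b0 x) + (a x - a0 x) * b0 x) + (a0 x * (b x - b0 x) + a0 x * b0 x)"
    by (simp add: algebra_simps)
  have "(LINT x:S|lborel. a x * b x)
      = (LINT x:S|lborel. ((a x - a0 x) * (b x - b0 x) + (a x - a0 x) * b0 x) + (a0 x * (b x - b0 x) + a0 x * b0 x))"
    by (simp only: e)
  also have "\<dots> = ((LINT x:S|lborel. (a x - a0 x) * (b x - b0 x)) + (LINT x:S|lborel. (a x - a0 x) * b0 x))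
      + ((LINT x:S|lborel. a0 x * (b x - b0 x)) + (LINT x:S|lborel. a0 x * b0 x))"
    using i1 i2 i3 i4 by (simp add: set_integral_add(2))
  finally show ?thesis by simp
qed

lemma ip_lim:
  fixes A B :: "'a \<Rightarrow> real \<Rightarrow> real"
  assumes ev: "eventually (\<lambda>s. L2on S (A s) \<and> L2on S (B s)) F"
    and A0: "L2on S A0" and B0: "L2on S B0"
    and la: "((\<lambda>s. LINT x:S|lborel. (A s x - A0 x)\<^sup>2) \<longlongrightarrow> 0) F"
    and lb: "((\<lambda>s. LINT x:S|lborel. (B s x - B0 x)\<^sup>2) \<longlongrightarrow> 0) F"
  shows "((\<lambda>s. LINT x:S|lborel. A s x * B s x) \<longlongrightarrow> (LINT x:S|lborel. A0 x * B0 x)) F"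
proof -
  define a where "a s = sqrt (LINT x:S|lborel. (A s x - A0 x)\<^sup>2)" for s
  define b where "b s = sqrt (LINT x:S|lborel. (B s x - B0 x)\<^sup>2)" for s
  define nA where "nA = sqrt (LINT x:S|lborel. (A0 x)\<^sup>2)"
  define nB where "nB = sqrt (LINT x:S|lborel. (B0 x)\<^sup>2)"
  have a0: "(a \<longlongrightarrow> 0) F" unfolding a_def using tendsto_real_sqrt[OF la] by simp
  have b0: "(b \<longlongrightarrow> 0) F" unfolding b_def using tendsto_real_sqrt[OF lb] by simp
  have R: "((\<lambda>s. a s * b s + a s * nB + nA * b s) \<longlongrightarrow> 0 * 0 + 0 * nB + nA * 0) F"
    by (intro tendsto_intros a0 b0)
  have ev2: "eventually (\<lambda>s. norm ((LINT x:S|lborel. A s x * B s x) - (LINT x:S|lborel. A0 x * B0 x))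
      \<le> a s * b s + a s * nB + nA * b s) F"
    using ev
  proof eventually_elim
    case (elim s)
    then have LA: "L2on S (A s)" and LB: "L2on S (B s)" by auto
    have da: "L2on S (\<lambda>x. A s x - A0 x)" by (rule L2on_diff[OF LA A0])
    have db: "L2on S (\<lambda>x. B s x - B0 x)" by (rule L2on_diff[OF LB B0])
    have "norm ((LINT x:S|lborel. A s x * B s x) - (LINT x:S|lborel. A0 x * B0 x))
      \<le> \<bar>LINT x:S|lborel. (A s x - A0 x) * (B s x - B0 x)\<bar> + \<bar>LINT x:S|lborel. (A s x - A0 x) * B0 x\<bar>
      + \<bar>LINT x:S|lborel. A0 x * (B s x - B0 x)\<bar>"
      unfolding ip_split[OF LA LB A0 B0] by simp
    also have "\<dots> \<le> a s * b s + a s * nB + nA * b s"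
      unfolding a_def b_def nA_def nB_def
      by (intro add_mono ip_abs da db A0 B0)
    finally show ?case .
  qed
  have "((\<lambda>s. (LINT x:S|lborel. A s x * B s x) - (LINT x:S|lborel. A0 x * B0 x)) \<longlongrightarrow> 0) F"
    by (rule Lim_null_comparison[OF ev2]) (use R in simp)
  then show ?thesis by (simp add: Lim_null[symmetric])
qed

lemma sqL2_eq: "sqL2 l f = (LINT x:{0<..<l}|lborel. (f x)\<^sup>2)" by (simp add: sqL2_def)

lemma dq_L2:
  assumes "L2 l (u s)" "L2 l (u t)" "L2 l v"
  shows "L2on {0<..<l} (\<lambda>x. (u s x - u t x) / (s - t) - v x)"
proof -
  have "L2on {0<..<l} (\<lambda>x. (1 / (s - t)) * u s x + (- 1 / (s - t)) * u t x)"
    using assms unfolding L2_eq by (intro L2on_lin)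
  then have "L2on {0<..<l} (\<lambda>x. (u s x - u t x) / (s - t))"
    by (rule L2on_cong) (simp add: field_simps diff_divide_distrib)
  then show ?thesis using assms(3) unfolding L2_eq by (intro L2on_diff)
qed

lemma deriv_unique_L2:
  assumes d1: "L2_has_deriv l T u t v1" and d2: "L2_has_deriv l T u t v2"
    and nb: "at t within {0..T} \<noteq> bot"
    and ev: "eventually (\<lambda>s. L2 l (u s)) (at t within {0..T})" and ut: "L2 l (u t)"
  shows "(LINT x:{0<..<l}|lborel. (v1 x - v2 x)\<^sup>2) = 0"
proof -
  define e1 where "e1 s = (LINT x:{0<..<l}|lborel. ((u s x - u t x) / (s - t) - v1 x)\<^sup>2)" for s
  define e2 where "e2 s = (LINT x:{0<..<l}|lborel. ((u s x - u t x) / (s - t) - v2 x)\<^sup>2)" for s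
  have l1: "(e1 \<longlongrightarrow> 0) (at t within {0..T})" using d1 unfolding L2_has_deriv_def sqL2_def e1_def[abs_def] by simp
  have l2: "(e2 \<longlongrightarrow> 0) (at t within {0..T})" using d2 unfolding L2_has_deriv_def sqL2_def e2_def[abs_def] by simp
  have L1: "L2 l v1" and L2': "L2 l v2" using d1 d2 unfolding L2_has_deriv_def by auto
  have le: "eventually (\<lambda>s. (LINT x:{0<..<l}|lborel. (v1 x - v2 x)\<^sup>2) \<le> 2 * e2 s + 2 * e1 s) (at t within {0..T})"
    using ev
  proof eventually_elim
    case (elim s)
    have q2: "L2on {0<..<l} (\<lambda>x. (u s x - u t x) / (s - t) - v2 x)" by (rule dq_L2[OF elim ut L2'])
    have q1: "L2on {0<..<l} (\<lambda>x. (u s x - u t x) / (s - t) - v1 x)" by (rule dq_L2[OF elim ut L1])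
    have q1': "L2on {0<..<l} (\<lambda>x. - ((u s x - u t x) / (s - t) - v1 x))"
      using L2on_scale[OF q1, of "-1"] by simp
    have "(LINT x:{0<..<l}|lborel. (((u s x - u t x) / (s - t) - v2 x) + (- ((u s x - u t x) / (s - t) - v1 x)))\<^sup>2)
        \<le> 2 * (LINT x:{0<..<l}|lborel. ((u s x - u t x) / (s - t) - v2 x)\<^sup>2)
          + 2 * (LINT x:{0<..<l}|lborel. (- ((u s x - u t x) / (s - t) - v1 x))\<^sup>2)"
      by (rule L2on_sq_ineq[OF q2 q1'])
    moreover have "(LINT x:{0<..<l}|lborel. (v1 x - (u s x - u t x) / (s - t))\<^sup>2)
       = (LINT x:{0<..<l}|lborel. ((u s x - u t x) / (s - t) - v1 x)\<^sup>2)"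
      by (simp only: power2_commute)
    ultimately show ?case by (simp add: e1_def e2_def)
  qed
  have "(LINT x:{0<..<l}|lborel. (v1 x - v2 x)\<^sup>2) \<le> 2 * 0 + 2 * 0"
    by (rule tendsto_le[OF nb _ tendsto_const le]) (intro tendsto_intros l1 l2)
  moreover have "0 \<le> (LINT x:{0<..<l}|lborel. (v1 x - v2 x)\<^sup>2)" by (rule L2on_sq_nonneg)
  ultimately show ?thesis by simp
qed

lemma sq_zero_AE:
  assumes "L2on S f" "(LINT x:S|lborel. (f x)\<^sup>2) = 0"
  shows "AE x in lborel. x \<in> S \<longrightarrow> f x = 0"
proof -
  have i: "integrable lborel (\<lambda>x. indicator S x *\<^sub>R (f x)\<^sup>2)"
    using assms(1) unfolding L2on_def set_integrable_def by simp
  have "AE x in lborel. indicator S x *\<^sub>R (f x)\<^sup>2 = 0"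
    using integral_nonneg_eq_0_iff_AE[OF i] assms(2) unfolding set_lebesgue_integral_def
    by (simp add: indicator_def)
  then show ?thesis by eventually_elim (auto simp: indicator_def)
qed

lemma dq_L2':
  assumes "L2 l (u s)" "L2 l (u t)"
  shows "L2on {0<..<l} (\<lambda>x. (u s x - u t x) / (s - t))"
proof -
  have "L2on {0<..<l} (\<lambda>x. (1 / (s - t)) * u s x + (- 1 / (s - t)) * u t x)"
    using assms unfolding L2_eq by (intro L2on_lin)
  then show ?thesis
    by (rule L2on_cong) (simp add: field_simps diff_divide_distrib)
qed

lemma ev_within: "eventually (\<lambda>s. s \<in> S) (at r within S)"
  by (simp add: eventually_at_filter)

lemma filterlim_reflect:
  fixes c r :: real
  assumes "\<And>s. s \<in> S \<Longrightarrow> c - s \<in> S'"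
  shows "filterlim (\<lambda>s. c - s) (at (c - r) within S') (at r within S)"
proof (subst filterlim_at, intro conjI)
  show "eventually (\<lambda>s. c - s \<in> S' \<and> c - s \<noteq> c - r) (at r within S)"
    unfolding eventually_at_filter using assms by (intro always_eventually) auto
  show "((\<lambda>s. c - s) \<longlongrightarrow> c - r) (at r within S)" by (intro tendsto_intros)
qed

lemma backward_step:
  assumes hs: "heat_sol l T a u0 u" and l0: "0 < l" and c: "0 < c" "c \<le> T"
    and z: "sqL2 l (u c) = 0"
  shows "sqL2 l (u (c/2)) = 0"
proof -
  have Lu: "\<And>t. t \<in> {0..T} \<Longrightarrow> L2on {0<..<l} (u t)"
    using hs unfolding heat_sol_def L2_eq by auto
  have cont: "\<And>t. t \<in> {0..T} \<Longrightarrow> ((\<lambda>s. LINT x:{0<..<l}|lborel. (u s x - u t x)\<^sup>2) \<longlongrightarrow> 0) (at t within {0..T})"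
    using hs unfolding heat_sol_def sqL2_def by auto
  have "\<forall>t\<in>{0<..T}. \<exists>h. domA l (u t) h \<and> L2_has_deriv l T u t (\<lambda>x. a * h x)"
    using hs unfolding heat_sol_def by auto
  then obtain H where H: "\<And>t. t \<in> {0<..T} \<Longrightarrow> domA l (u t) (H t) \<and> L2_has_deriv l T u t (\<lambda>x. a * H t x)"
    by metis
  define \<phi> where "\<phi> r = (LINT x:{0<..<l}|lborel. u r x * u (c - r) x)" for r
  have phi0: "\<phi> 0 = 0"
  proof -
    have "\<bar>\<phi> 0\<bar> \<le> sqrt (LINT x:{0<..<l}|lborel. (u 0 x)\<^sup>2) * sqrt (LINT x:{0<..<l}|lborel. (u c x)\<^sup>2)"
      unfolding \<phi>_def diff_zero by (rule ip_abs) (use Lu c in auto)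
    then show ?thesis using z by (simp add: sqL2_def)
  qed
  have contphi: "continuous_on {0..c} \<phi>"
    unfolding continuous_on_def
  proof
    fix r assume r: "r \<in> {0..c}"
    show "(\<phi> \<longlongrightarrow> \<phi> r) (at r within {0..c})"
      unfolding \<phi>_def
    proof (rule ip_lim)
      show "eventually (\<lambda>s. L2on {0<..<l} (u s) \<and> L2on {0<..<l} (u (c - s))) (at r within {0..c})"
        using ev_within[of "{0..c}" r] by eventually_elim (use c in \<open>auto intro!: Lu\<close>)
      show "L2on {0<..<l} (u r)" "L2on {0<..<l} (u (c - r))" using r c by (auto intro!: Lu)
      show "((\<lambda>s. LINT x:{0<..<l}|lborel. (u s x - u r x)\<^sup>2) \<longlongrightarrow> 0) (at r within {0..c})"
        by (rule tendsto_within_subset[OF cont]) (use r c in auto)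
      have fl: "filterlim (\<lambda>s. c - s) (at (c - r) within {0..T}) (at r within {0..c})"
        by (rule filterlim_reflect) (use c in auto)
      show "((\<lambda>s. LINT x:{0<..<l}|lborel. (u (c - s) x - u (c - r) x)\<^sup>2) \<longlongrightarrow> 0) (at r within {0..c})"
        using filterlim_compose[OF cont fl] r c by auto
    qed
  qed
  have derphi: "DERIV \<phi> r :> 0" if r: "0 < r" "r < c" for r
  proof -
    have rT: "r \<in> {0<..T}" "c - r \<in> {0<..T}" using r c by auto
    have atr: "at r within {0..T} = at r" using r c by (intro at_within_Icc_at) auto
    have atcr: "at (c - r) within {0..T} = at (c - r)" using r c by (intro at_within_Icc_at) auto
    have Hr: "domA l (u r) (H r)" and Dr: "L2_has_deriv l T u r (\<lambda>x. a * H r x)" using H[OF rT(1)] by auto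
    have Hcr: "domA l (u (c - r)) (H (c - r))" and Dcr: "L2_has_deriv l T u (c - r) (\<lambda>x. a * H (c - r) x)"
      using H[OF rT(2)] by auto
    have LHr: "L2on {0<..<l} (\<lambda>x. a * H r x)" using domA_D(2)[OF Hr] by (rule L2on_scale)
    have LHcr: "L2on {0<..<l} (\<lambda>x. - (a * H (c - r) x))"
      using L2on_scale[OF domA_D(2)[OF Hcr], of "- a"] by simp
    have evs: "eventually (\<lambda>s. 0 < s \<and> s < c) (at r)"
    proof -
      have t: "((\<lambda>s. s) \<longlongrightarrow> r) (at r)" by (rule tendsto_ident_at)
      have "eventually (\<lambda>s. 0 < s) (at r)" using order_tendstoD(1)[OF t] r by auto
      moreover have "eventually (\<lambda>s. s < c) (at r)" using order_tendstoD(2)[OF t] r by auto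
      ultimately show ?thesis by (rule eventually_conj)
    qed
    have fl: "filterlim (\<lambda>s. c - s) (at (c - r)) (at r)"
      using filterlim_reflect[of UNIV c UNIV r] by simp
    have lim1: "((\<lambda>s. LINT x:{0<..<l}|lborel. ((u s x - u r x) / (s - r)) * u (c - s) x)
        \<longlongrightarrow> (LINT x:{0<..<l}|lborel. (a * H r x) * u (c - r) x)) (at r)"
    proof (rule ip_lim)
      show "eventually (\<lambda>s. L2on {0<..<l} (\<lambda>x. (u s x - u r x) / (s - r)) \<and> L2on {0<..<l} (u (c - s))) (at r)"
        using evs by eventually_elim (use r c Lu in \<open>auto intro!: dq_L2' simp: L2_eq\<close>)
      show "L2on {0<..<l} (\<lambda>x. a * H r x)" by (rule LHr)
      show "L2on {0<..<l} (u (c - r))" using rT by (auto intro!: Lu)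
      show "((\<lambda>s. LINT x:{0<..<l}|lborel. ((u s x - u r x) / (s - r) - a * H r x)\<^sup>2) \<longlongrightarrow> 0) (at r)"
        using Dr unfolding L2_has_deriv_def sqL2_def atr by simp
      show "((\<lambda>s. LINT x:{0<..<l}|lborel. (u (c - s) x - u (c - r) x)\<^sup>2) \<longlongrightarrow> 0) (at r)"
        using filterlim_compose[OF cont[of "c - r", unfolded atcr] fl] rT by auto
    qed
    have lim2: "((\<lambda>s. LINT x:{0<..<l}|lborel. u r x * ((u (c - s) x - u (c - r) x) / (s - r)))
        \<longlongrightarrow> (LINT x:{0<..<l}|lborel. u r x * (- (a * H (c - r) x)))) (at r)"
    proof (rule ip_lim)
      show "eventually (\<lambda>s. L2on {0<..<l} (u r) \<and> L2on {0<..<l} (\<lambda>x. (u (c - s) x - u (c - r) x) / (s - r))) (at r)"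
      proof -
        have "eventually (\<lambda>s. L2on {0<..<l} (\<lambda>x. (u (c - s) x - u (c - r) x) / ((c - s) - (c - r)))) (at r)"
          using evs
        proof eventually_elim
          case (elim s)
          have "L2 l (u (c - s))" "L2 l (u (c - r))" using elim r c Lu unfolding L2_eq by auto
          then show ?case by (rule dq_L2')
        qed
        then have "eventually (\<lambda>s. L2on {0<..<l} (\<lambda>x. (u (c - s) x - u (c - r) x) / (s - r))) (at r)"
        proof eventually_elim
          case (elim s)
          then have "L2on {0<..<l} (\<lambda>x. (-1) * ((u (c - s) x - u (c - r) x) / ((c - s) - (c - r))))"
            by (rule L2on_scale)
          then show ?case by (rule L2on_cong) (simp, metis minus_diff_eq minus_divide_divide)
        qed
        moreover have "L2on {0<..<l} (u r)" using rT by (auto intro!: Lu)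
        ultimately show ?thesis by (auto elim: eventually_mono)
      qed
      show "L2on {0<..<l} (u r)" using rT by (auto intro!: Lu)
      show "L2on {0<..<l} (\<lambda>x. - (a * H (c - r) x))" by (rule LHcr)
      show "((\<lambda>s. LINT x:{0<..<l}|lborel. (u r x - u r x)\<^sup>2) \<longlongrightarrow> 0) (at r)" by simp
      have E: "((\<lambda>s'. LINT x:{0<..<l}|lborel. ((u s' x - u (c - r) x) / (s' - (c - r)) - a * H (c - r) x)\<^sup>2) \<longlongrightarrow> 0) (at (c - r))"
        using Dcr unfolding L2_has_deriv_def sqL2_def atcr by simp
      have eq: "((u (c - s) x - u (c - r) x) / (s - r) - - (a * H (c - r) x))\<^sup>2
          = ((u (c - s) x - u (c - r) x) / ((c - s) - (c - r)) - a * H (c - r) x)\<^sup>2" for s x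
      proof -
        have "(c - s) - (c - r) = - (s - r)" by simp
        then have "(u (c - s) x - u (c - r) x) / ((c - s) - (c - r)) = - ((u (c - s) x - u (c - r) x) / (s - r))"
          by (simp only: divide_minus_right)
        then show ?thesis by (simp add: power2_eq_square algebra_simps)
      qed
      show "((\<lambda>s. LINT x:{0<..<l}|lborel. ((u (c - s) x - u (c - r) x) / (s - r) - - (a * H (c - r) x))\<^sup>2) \<longlongrightarrow> 0) (at r)"
        unfolding eq using filterlim_compose[OF E fl] by simp
    qed
    have lim: "((\<lambda>s. (LINT x:{0<..<l}|lborel. ((u s x - u r x) / (s - r)) * u (c - s) x)
        + (LINT x:{0<..<l}|lborel. u r x * ((u (c - s) x - u (c - r) x) / (s - r))))
        \<longlongrightarrow> (LINT x:{0<..<l}|lborel. (a * H r x) * u (c - r) x) + (LINT x:{0<..<l}|lborel. u r x * (- (a * H (c - r) x)))) (at r)"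
      by (rule tendsto_add[OF lim1 lim2])
    have val: "(LINT x:{0<..<l}|lborel. (a * H r x) * u (c - r) x) + (LINT x:{0<..<l}|lborel. u r x * (- (a * H (c - r) x))) = 0"
    proof -
      have "(LINT x:{0<..<l}|lborel. (a * H r x) * u (c - r) x) = a * (LINT x:{0<..<l}|lborel. H r x * u (c - r) x)"
        by (simp add: mult.assoc)
      moreover have "(LINT x:{0<..<l}|lborel. u r x * (- (a * H (c - r) x))) = - (a * (LINT x:{0<..<l}|lborel. u r x * H (c - r) x))"
      proof -
        have "(LINT x:{0<..<l}|lborel. u r x * (- (a * H (c - r) x))) = (LINT x:{0<..<l}|lborel. (- a) * (u r x * H (c - r) x))"
          by (simp add: algebra_simps)
        also have "\<dots> = (- a) * (LINT x:{0<..<l}|lborel. u r x * H (c - r) x)"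
          by (rule set_integral_mult_right)
        finally show ?thesis by simp
      qed
      moreover have "(LINT x:{0<..<l}|lborel. H r x * u (c - r) x) = (LINT x:{0<..<l}|lborel. u r x * H (c - r) x)"
        by (rule green[OF Hr Hcr l0])
      ultimately show ?thesis by simp
    qed
    have eqv: "eventually (\<lambda>s. (LINT x:{0<..<l}|lborel. ((u s x - u r x) / (s - r)) * u (c - s) x)
        + (LINT x:{0<..<l}|lborel. u r x * ((u (c - s) x - u (c - r) x) / (s - r))) = (\<phi> s - \<phi> r) / (s - r)) (at r)"
      using evs
    proof eventually_elim
      case (elim s)
      have Ls: "L2on {0<..<l} (u s)" and Lcs: "L2on {0<..<l} (u (c - s))" using elim c by (auto intro!: Lu)
      have Lr: "L2on {0<..<l} (u r)" and Lcr: "L2on {0<..<l} (u (c - r))" using rT by (auto intro!: Lu)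
      have i1: "set_integrable lborel {0<..<l} (\<lambda>x. u s x * u (c - s) x)" by (rule L2on_prod[OF Ls Lcs])
      have i2: "set_integrable lborel {0<..<l} (\<lambda>x. u r x * u (c - r) x)" by (rule L2on_prod[OF Lr Lcr])
      have i3: "set_integrable lborel {0<..<l} (\<lambda>x. (u s x - u r x) * u (c - s) x)"
        by (rule L2on_prod[OF L2on_diff[OF Ls Lr] Lcs])
      have i4: "set_integrable lborel {0<..<l} (\<lambda>x. u r x * (u (c - s) x - u (c - r) x))"
        by (rule L2on_prod[OF Lr L2on_diff[OF Lcs Lcr]])
      have pe: "\<And>x. u s x * u (c - s) x - u r x * u (c - r) x
          = (u s x - u r x) * u (c - s) x + u r x * (u (c - s) x - u (c - r) x)"
        by (simp add: algebra_simps)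
      have "\<phi> s - \<phi> r = (LINT x:{0<..<l}|lborel. u s x * u (c - s) x - u r x * u (c - r) x)"
        unfolding \<phi>_def using i1 i2 by (simp add: set_integral_diff(2))
      also have "\<dots> = (LINT x:{0<..<l}|lborel. (u s x - u r x) * u (c - s) x + u r x * (u (c - s) x - u (c - r) x))"
        by (simp only: pe)
      also have "\<dots> = (LINT x:{0<..<l}|lborel. (u s x - u r x) * u (c - s) x)
          + (LINT x:{0<..<l}|lborel. u r x * (u (c - s) x - u (c - r) x))"
        using i3 i4 by (simp add: set_integral_add(2))
      finally have "(\<phi> s - \<phi> r) / (s - r) = (LINT x:{0<..<l}|lborel. (u s x - u r x) * u (c - s) x) / (s - r)
          + (LINT x:{0<..<l}|lborel. u r x * (u (c - s) x - u (c - r) x)) / (s - r)"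
        by (simp add: add_divide_distrib)
      also have "\<dots> = (LINT x:{0<..<l}|lborel. (u s x - u r x) * u (c - s) x / (s - r))
          + (LINT x:{0<..<l}|lborel. u r x * (u (c - s) x - u (c - r) x) / (s - r))"
        by (simp only: set_integral_divide_zero)
      also have "\<dots> = (LINT x:{0<..<l}|lborel. ((u s x - u r x) / (s - r)) * u (c - s) x)
          + (LINT x:{0<..<l}|lborel. u r x * ((u (c - s) x - u (c - r) x) / (s - r)))"
        by (simp add: field_simps)
      finally show ?case by simp
    qed
    have "((\<lambda>s. (\<phi> s - \<phi> r) / (s - r)) \<longlongrightarrow> 0) (at r)"
      using Lim_transform_eventually[OF lim[unfolded val] eqv] .
    then show ?thesis by (simp add: has_field_derivative_iff)
  qed
  have "\<phi> (c/2) = \<phi> 0"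
    by (rule DERIV_isconst2[OF c(1) contphi derphi]) (use c in auto)
  then show ?thesis using phi0 by (simp add: \<phi>_def sqL2_def power2_eq_square)
qed

lemma backward_all:
  assumes hs: "heat_sol l T a u0 u" and l0: "0 < l" and c: "0 < c" "c \<le> T"
    and z: "sqL2 l (u c) = 0"
  shows "sqL2 l (u (c / 2 ^ n)) = 0"
proof (induction n)
  case 0 then show ?case using z by simp
next
  case (Suc n)
  have "c / 2 ^ n \<le> c" using c by (simp add: divide_le_eq order_trans[OF _ one_le_power])
  then have "sqL2 l (u ((c / 2 ^ n) / 2)) = 0"
    by (intro backward_step[OF hs l0 _ _ Suc.IH]) (use c in auto)
  then show ?case by (simp add: field_simps)
qed

lemma init_zero:
  assumes hs: "heat_sol l T a u0 u" and l0: "0 < l" and c: "0 < c" "c \<le> T"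
    and z: "sqL2 l (u c) = 0"
  shows "AE x in lborel. x \<in> {0<..<l} \<longrightarrow> u0 x = 0"
proof -
  have Lu: "\<And>t. t \<in> {0..T} \<Longrightarrow> L2on {0<..<l} (u t)"
    using hs unfolding heat_sol_def L2_eq by auto
  have cont0: "((\<lambda>s. LINT x:{0<..<l}|lborel. (u s x - u 0 x)\<^sup>2) \<longlongrightarrow> 0) (at 0 within {0..T})"
    using hs c unfolding heat_sol_def sqL2_def by auto
  define s where "s n = c / 2 ^ n" for n :: nat
  have s0: "0 < s n" "s n \<le> T" for n
  proof -
    show "0 < s n" using c by (simp add: s_def)
    have "c / 2 ^ n \<le> c" using c by (simp add: divide_le_eq order_trans[OF _ one_le_power])
    then show "s n \<le> T" using c by (simp add: s_def)
  qed
  have slim: "s \<longlonglongrightarrow> 0" unfolding s_def by real_asymp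
  have sat: "filterlim s (at 0 within {0..T}) sequentially"
    unfolding filterlim_at using slim s0 by (auto intro!: always_eventually simp: less_imp_le) (metis less_irrefl)
  have lim: "(\<lambda>n. LINT x:{0<..<l}|lborel. (u (s n) x - u 0 x)\<^sup>2) \<longlonglongrightarrow> 0"
    using filterlim_compose[OF cont0 sat] .
  have zs: "(LINT x:{0<..<l}|lborel. (u (s n) x)\<^sup>2) = 0" for n
    using backward_all[OF hs l0 c z, of n] by (simp add: s_def sqL2_def)
  have le: "(LINT x:{0<..<l}|lborel. (u 0 x)\<^sup>2) \<le> 2 * (LINT x:{0<..<l}|lborel. (u (s n) x - u 0 x)\<^sup>2)" for n
  proof -
    have L0: "L2on {0<..<l} (u 0)" using c by (auto intro!: Lu)
    have Ls: "L2on {0<..<l} (u (s n))" using s0[of n] by (auto intro!: Lu)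
    have "(LINT x:{0<..<l}|lborel. ((u 0 x - u (s n) x) + u (s n) x)\<^sup>2)
        \<le> 2 * (LINT x:{0<..<l}|lborel. (u 0 x - u (s n) x)\<^sup>2) + 2 * (LINT x:{0<..<l}|lborel. (u (s n) x)\<^sup>2)"
      by (rule L2on_sq_ineq[OF L2on_diff[OF L0 Ls] Ls])
    moreover have "(LINT x:{0<..<l}|lborel. (u 0 x - u (s n) x)\<^sup>2) = (LINT x:{0<..<l}|lborel. (u (s n) x - u 0 x)\<^sup>2)"
      by (simp only: power2_commute)
    ultimately show ?thesis using zs[of n] by simp
  qed
  have "(LINT x:{0<..<l}|lborel. (u 0 x)\<^sup>2) \<le> 2 * 0"
    by (rule tendsto_le[OF trivial_limit_sequentially tendsto_mult[OF tendsto_const lim] tendsto_const])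
       (simp add: le)
  then have "(LINT x:{0<..<l}|lborel. (u 0 x)\<^sup>2) = 0"
    using L2on_sq_nonneg[of "{0<..<l}" "u 0"] by simp
  then have "AE x in lborel. x \<in> {0<..<l} \<longrightarrow> u 0 x = 0"
    using c by (intro sq_zero_AE Lu) auto
  moreover have "AE x in lborel. x \<in> {0<..<l} \<longrightarrow> u 0 x = u0 x"
    using hs unfolding heat_sol_def by auto
  ultimately show ?thesis by eventually_elim auto
qed

lemma set_int_cong_AE_sub:
  assumes "L2on S f" "L2on S g" "A \<subseteq> S" "A \<in> sets lborel"
    and ae: "AE x in lborel. x \<in> S \<longrightarrow> f x = g x"
  shows "(LINT x:A|lborel. f x) = (LINT x:A|lborel. g x)"
  unfolding set_lebesgue_integral_def
proof (rule integral_cong_AE)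
  show "(\<lambda>x. indicator A x *\<^sub>R f x) \<in> borel_measurable lborel"
    using L2on_D(1)[OF L2on_subset[OF assms(1,3,4)]] by simp
  show "(\<lambda>x. indicator A x *\<^sub>R g x) \<in> borel_measurable lborel"
    using L2on_D(1)[OF L2on_subset[OF assms(2,3,4)]] by simp
  show "AE x in lborel. indicator A x *\<^sub>R f x = indicator A x *\<^sub>R g x"
    using ae by eventually_elim (use assms(3) in \<open>auto simp: indicator_def\<close>)
qed

lemma nb_at:
  fixes t T :: real
  assumes "0 < t" "t \<le> T"
  shows "at t within {0..T} \<noteq> bot"
proof (cases "t < T")
  case True
  then have "at t within {0..T} = at t" using assms by (intro at_within_Icc_at) auto
  then show ?thesis by simp
next
  case False
  then have "t = T" using assms by simp
  then have "at t within {0..T} = at_left t" using assms by (simp add: at_within_Icc_at_left)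
  then show ?thesis by simp
qed

theorem corollary3p4:
  fixes l T a1 a2 a_low t0 :: real
    and u0 :: "real \<Rightarrow> real"
    and u1 u2 :: "real \<Rightarrow> real \<Rightarrow> real"
  assumes "l > 0" and "T > 0" and "a_low > 0" and "a1 \<ge> a_low" and "a2 \<ge> a_low"
    and "L2 l u0" and "\<not> (AE x in lborel. x \<in> {0<..<l} \<longrightarrow> u0 x = 0)"
    and "heat_sol l T a1 u0 u1" and "heat_sol l T a2 u0 u2"
    and "t0 \<in> {0<..T}"
    and "\<exists>v. L2_has_deriv l T u1 t0 v \<and> L2_has_deriv l T u2 t0 v"
    and "\<forall>x\<in>{0<..<l}. deriv (u1 t0) x = deriv (u2 t0) x"
  shows "a1 = a2"
proof (rule ccontr)
  assume ne: "a1 \<noteq> a2"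
  note l0 = assms(1)
  have a2p: "a2 > 0" using assms(3,5) by simp
  have t0: "0 < t0" "t0 \<le> T" using assms(10) by auto
  obtain v where v1: "L2_has_deriv l T u1 t0 v" and v2: "L2_has_deriv l T u2 t0 v" using assms(11) by blast
  obtain h1 where h1: "domA l (u1 t0) h1" "L2_has_deriv l T u1 t0 (\<lambda>x. a1 * h1 x)"
    using assms(8,10) unfolding heat_sol_def by blast
  obtain h2 where h2: "domA l (u2 t0) h2" "L2_has_deriv l T u2 t0 (\<lambda>x. a2 * h2 x)"
    using assms(9,10) unfolding heat_sol_def by blast
  have nb: "at t0 within {0..T} \<noteq> bot" by (rule nb_at[OF t0])
  have Lu1: "\<And>t. t \<in> {0..T} \<Longrightarrow> L2 l (u1 t)" using assms(8) unfolding heat_sol_def by auto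
  have Lu2: "\<And>t. t \<in> {0..T} \<Longrightarrow> L2 l (u2 t)" using assms(9) unfolding heat_sol_def by auto
  have ev1: "eventually (\<lambda>s. L2 l (u1 s)) (at t0 within {0..T})"
    using ev_within[of "{0..T}" t0] by eventually_elim (rule Lu1)
  have ev2: "eventually (\<lambda>s. L2 l (u2 s)) (at t0 within {0..T})"
    using ev_within[of "{0..T}" t0] by eventually_elim (rule Lu2)
  have Lv: "L2on {0<..<l} v" using v1 unfolding L2_has_deriv_def L2_eq by simp
  have Lh1: "L2on {0<..<l} (\<lambda>x. a1 * h1 x)" using h1(2) unfolding L2_has_deriv_def L2_eq by simp
  have Lh2: "L2on {0<..<l} (\<lambda>x. a2 * h2 x)" using h2(2) unfolding L2_has_deriv_def L2_eq by simp
  have "(LINT x:{0<..<l}|lborel. (v x - a1 * h1 x)\<^sup>2) = 0"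
    by (rule deriv_unique_L2[OF v1 h1(2) nb ev1 Lu1]) (use t0 in auto)
  then have ae1: "AE x in lborel. x \<in> {0<..<l} \<longrightarrow> v x - a1 * h1 x = 0"
    by (intro sq_zero_AE L2on_diff Lv Lh1)
  have "(LINT x:{0<..<l}|lborel. (v x - a2 * h2 x)\<^sup>2) = 0"
    by (rule deriv_unique_L2[OF v2 h2(2) nb ev2 Lu2]) (use t0 in auto)
  then have ae2: "AE x in lborel. x \<in> {0<..<l} \<longrightarrow> v x - a2 * h2 x = 0"
    by (intro sq_zero_AE L2on_diff Lv Lh2)
  have ae: "AE x in lborel. x \<in> {0<..<l} \<longrightarrow> h2 x = (a1 / a2) * h1 x"
    using ae1 ae2 by eventually_elim (use a2p in \<open>auto simp: field_simps\<close>)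
  define w where "w x = x * deriv (u1 t0) x" for x
  have wconst: "w y = w x" if xy: "0 < x" "x \<le> y" "y < l" for x y
  proof -
    have sub: "{x..y} \<subseteq> {0<..<l}" using xy by auto
    have i1: "w y - w x = (LINT s:{x..y}|lborel. h1 s)"
      unfolding w_def by (rule domA_D(8)[OF h1(1) xy])
    have "y * deriv (u2 t0) y - x * deriv (u2 t0) x = (LINT s:{x..y}|lborel. h2 s)"
      by (rule domA_D(8)[OF h2(1) xy])
    then have i2: "w y - w x = (LINT s:{x..y}|lborel. h2 s)"
      unfolding w_def using assms(12) xy by simp
    have "(LINT s:{x..y}|lborel. h2 s) = (LINT s:{x..y}|lborel. (a1 / a2) * h1 s)"
      by (rule set_int_cong_AE_sub[OF domA_D(2)[OF h2(1)] L2on_scale[OF domA_D(2)[OF h1(1)]] sub _ ae]) simp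
    then have "(LINT s:{x..y}|lborel. h2 s) = (a1 / a2) * (LINT s:{x..y}|lborel. h1 s)" by simp
    then have "(w y - w x) = (a1 / a2) * (w y - w x)" using i1 i2 by simp
    moreover have "a1 / a2 \<noteq> 1" using ne a2p by (simp add: divide_eq_1_iff)
    ultimately show ?thesis by (metis mult_cancel_right2 eq_iff_diff_eq_0 mult.commute)
  qed
  define c where "c = w (l/2)"
  have wc: "w x = c" if "0 < x" "x < l" for x
  proof (cases "x \<le> l/2")
    case True then show ?thesis unfolding c_def using wconst[of x "l/2"] that l0 by simp
  next
    case False then show ?thesis unfolding c_def using wconst[of "l/2" x] that l0 by simp
  qed
  have c0: "c = 0"
  proof (rule ccontr)
    assume "c \<noteq> 0"
    show False
    proof (rule no_inv_bound[OF l0, of "c\<^sup>2" "\<lambda>x. x * (deriv (u1 t0) x)\<^sup>2"])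
      show "0 < c\<^sup>2" using \<open>c \<noteq> 0\<close> by simp
      show "set_integrable lborel {0<..<l} (\<lambda>x. x * (deriv (u1 t0) x)\<^sup>2)" by (rule domA_D(6)[OF h1(1)])
      fix x assume x: "0 < x" "x < l"
      have "x * (deriv (u1 t0) x)\<^sup>2 = (w x)\<^sup>2 / x" using x by (simp add: w_def power2_eq_square)
      then show "c\<^sup>2 / x \<le> x * (deriv (u1 t0) x)\<^sup>2" using wc[OF x] by simp
    qed
  qed
  have d0: "deriv (u1 t0) x = 0" if "0 < x" "x < l" for x
    using wc[OF that] c0 that by (simp add: w_def)
  have "\<exists>k. \<forall>x\<in>{0<..<l}. u1 t0 x = k"
  proof (rule has_field_derivative_zero_constant)
    show "convex {0<..<l::real}" by simp
    fix z assume z: "z \<in> {0<..<l}"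
    then have "u1 t0 differentiable (at z)" using domA_D(3)[OF h1(1)] by auto
    then have "(u1 t0 has_real_derivative deriv (u1 t0) z) (at z)" by (simp add: DERIV_deriv_iff_real_differentiable)
    then show "(u1 t0 has_field_derivative 0) (at z within {0<..<l})"
      using d0 z by (auto intro: has_field_derivative_at_within)
  qed
  then obtain k where k: "\<And>x. x \<in> {0<..<l} \<Longrightarrow> u1 t0 x = k" by blast
  have const: "u1 t0 x = u1 t0 (l/2)" if "x \<in> {0<..<l}" for x
    using k[OF that] k[of "l/2"] l0 by simp
  have lim1: "(u1 t0 \<longlongrightarrow> 0) (at_left l)"
    using domA_D(4,5)[OF h1(1)] by (simp add: continuous_within)
  have "\<forall>y>0. y < l \<longrightarrow> u1 t0 (l/2) = u1 t0 y"
    by (intro allI impI, rule const[symmetric]) auto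
  then have "eventually (\<lambda>x. u1 t0 (l/2) = u1 t0 x) (at_left l)"
    unfolding eventually_at_left_field using l0 by blast
  then have lim2: "(u1 t0 \<longlongrightarrow> u1 t0 (l/2)) (at_left l)"
    by (rule Lim_transform_eventually[OF tendsto_const])
  have "u1 t0 (l/2) = 0" using tendsto_unique[OF _ lim2 lim1] by simp
  then have "sqL2 l (u1 t0) = 0"
  proof -
    have "(LINT x:{0<..<l}|lborel. (u1 t0 x)\<^sup>2) = (LINT x:{0<..<l}|lborel. (0::real))"
    proof (rule set_lebesgue_integral_cong)
      show "\<forall>x. x \<in> {0<..<l} \<longrightarrow> (u1 t0 x)\<^sup>2 = 0"
      proof (intro allI impI)
        fix x assume "x \<in> {0<..<l}"
        then show "(u1 t0 x)\<^sup>2 = 0" using const[of x] \<open>u1 t0 (l/2) = 0\<close> by simp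
      qed
    qed simp
    then show ?thesis unfolding sqL2_def by simp
  qed
  from init_zero[OF assms(8) l0 t0 this] assms(7) show False by simp
qed

end
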